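(* Assume $\mathcal E$ is stable under pullback, $\mathcal N=\mathcal M\cap\operatorname{mor}\mathcal A$, and $\mathcal A$ is $\mathcal E$-reflective in $\mathcal X$ (i.e. $\rho_X\in\mathcal E$ for every $X\in\mathcal X$). Let $c$ be a closure operator on $\mathcal A$ and let $X\in\mathcal X$. If $R$ preserves products with $X$ (i.e. $\rho_{X\times Y}=\rho_X\times\rho_Y$ for every $Y\in\mathcal X$), then $X$ is $c^\rho$-compact if and only if $RX$ is $c$-compact.
   Context: Standing setting. $\mathcal X$ and $\mathcal A$ are finitely complete categories; $\mathcal X$ carries a proper factorization system $(\mathcal E,\mathcal M)$ and $\mathcal A$ a proper factorization system $(\mathcal F,\mathcal N)$ (proper: every member of $\mathcal E$, resp. $\mathcal F$, is an epimorphism and every member of $\mathcal M$, resp. $\mathcal N$, is a monomorphism). $\mathcal A$ is a full reflective subcategory of $\mathcal X$ with reflector $R:\mathcal X\to\mathcal A$ and reflection (unit) $\rho_X:X\to RX$; as in the paper's setting, $\mathcal N\subseteq\mathcal M$ and $R\mathcal E\subseteq\mathcal F$. For $X\in\mathcal X$, $\operatorname{sub}X$ is the class $\mathcal M/X$ of $\mathcal M$-morphisms with codomain $X$, preordered by $m\le n$ iff $m=nj$ for some morphism $j$; for $A\in\mathcal A$, $\operatorname{sub}_{\mathcal A}A=\mathcal N/A$ with the same preorder. For $f:X\to Y$ and $m\in\operatorname{sub}X$, the image $f(m)\in\operatorname{sub}Y$ is the $\mathcal M$-part of the $(\mathcal E,\mathcal M)$-factorization of $fm$, and for $n\in\operatorname{sub}Y$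 the preimage $f^{-1}(n)\in\operatorname{sub}X$ is the pullback of $n$ along $f$ (analogously in $\mathcal A$ using $(\mathcal F,\mathcal N)$). A closure operator $c$ on $\mathcal A$ (with respect to $\mathcal N$) is a family of maps $c_A:\operatorname{sub}_{\mathcal A}A\to\operatorname{sub}_{\mathcal A}A$ ($A\in\mathcal A$) such that $m\le c_A(m)$, $m\le n\Rightarrow c_A(m)\le c_A(n)$, and $f(c_A(m))\le c_B(f(m))$ for every morphism $f:A\to B$ of $\mathcal A$; closure operators on $\mathcal X$ (with respect to $\mathcal M$) are defined likewise. For an arbitrary morphism $g:M\to A$ of $\mathcal A$, write $g(1_M)$ for the $\mathcal N$-part of its $(\mathcal F,\mathcal N)$-factorization and put $c_A(g):=c_A(g(1_M))$. The $R$-initial lift of $c$ is the closure operator $c^\rho$ on $\mathcal X$ given by $c^\rho_X(m)=\rho_X^{-1}(c_{RX}(Rm))$ for $X\in\mathcal X$, $m\in\operatorname{sub}X$. For a closure operator $d$ on a category, an object $X$ is $d$-compact if for every object $Y$ the projection $\pi_Y:X\times Y\to Y$ is $d$-preserving, i.e. $\pi_Y(d_{X\times Y}(m))=d_Y(\pi_Y(m))$ for every subobject $m$ of $X\times Y$ (for $c$-compactness of an object of $\mathcal A$, $Y$ ranges over $\mathcal A$ and subobjects over $\operatorname{sub}_{\mathcal A}$; for $c^\rho$-compactness, over $\mathcal X$ and $\operatorname{sub}$). *)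

theory Defs
  imports Main
begin

record ('o,'m) cat =
  Obj  :: "'o set"
  Arr  :: "'m set"
  Dom  :: "'m \<Rightarrow> 'o"
  Cod  :: "'m \<Rightarrow> 'o"
  Id   :: "'o \<Rightarrow> 'm"
  Comp :: "'m \<Rightarrow> 'm \<Rightarrow> 'm"   (* Comp C g f = g o f *)

definition hom :: "('o,'m) cat \<Rightarrow> 'o \<Rightarrow> 'o \<Rightarrow> 'm set" where
  "hom C X Y = {f \<in> Arr C. Dom C f = X \<and> Cod C f = Y}"

definition is_category :: "('o,'m) cat \<Rightarrow> bool" where
  "is_category C \<longleftrightarrow>
     (\<forall>f\<in>Arr C. Dom C f \<in> Obj C \<and> Cod C f \<in> Obj C) \<and>
     (\<forall>X\<in>Obj C. Id C X \<in> hom C X X) \<and>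
     (\<forall>f\<in>Arr C. \<forall>g\<in>Arr C. Cod C f = Dom C g \<longrightarrow> Comp C g f \<in> hom C (Dom C f) (Cod C g)) \<and>
     (\<forall>f\<in>Arr C. Comp C f (Id C (Dom C f)) = f \<and> Comp C (Id C (Cod C f)) f = f) \<and>
     (\<forall>f\<in>Arr C. \<forall>g\<in>Arr C. \<forall>h\<in>Arr C. Cod C f = Dom C g \<longrightarrow> Cod C g = Dom C h \<longrightarrow>
         Comp C h (Comp C g f) = Comp C (Comp C h g) f)"

text \<open>Everything below is relative to the full subcategory of C spanned by an object set S.\<close>

definition arrs :: "('o,'m) cat \<Rightarrow> 'o set \<Rightarrow> 'm set" where
  "arrs C S = {f \<in> Arr C. Dom C f \<in> S \<and> Cod C f \<in> S}"

definition is_iso :: "('o,'m) cat \<Rightarrow> 'm \<Rightarrow> bool" where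
  "is_iso C f \<longleftrightarrow> f \<in> Arr C \<and> (\<exists>g\<in>hom C (Cod C f) (Dom C f).
      Comp C g f = Id C (Dom C f) \<and> Comp C f g = Id C (Cod C f))"

definition is_mono :: "('o,'m) cat \<Rightarrow> 'o set \<Rightarrow> 'm \<Rightarrow> bool" where
  "is_mono C S f \<longleftrightarrow> f \<in> arrs C S \<and>
     (\<forall>g\<in>arrs C S. \<forall>h\<in>arrs C S. Cod C g = Dom C f \<and> Cod C h = Dom C f \<and> Dom C g = Dom C h
        \<and> Comp C f g = Comp C f h \<longrightarrow> g = h)"

definition is_epi :: "('o,'m) cat \<Rightarrow> 'o set \<Rightarrow> 'm \<Rightarrow> bool" where
  "is_epi C S f \<longleftrightarrow> f \<in> arrs C S \<and>
     (\<forall>g\<in>arrs C S. \<forall>h\<in>arrs C S. Dom C g = Cod C f \<and> Dom C h = Cod C f \<and> Cod C g = Cod C h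
        \<and> Comp C g f = Comp C h f \<longrightarrow> g = h)"

definition is_terminal :: "('o,'m) cat \<Rightarrow> 'o set \<Rightarrow> 'o \<Rightarrow> bool" where
  "is_terminal C S T \<longleftrightarrow> T \<in> S \<and> (\<forall>X\<in>S. \<exists>!t. t \<in> hom C X T)"

definition is_pullback :: "('o,'m) cat \<Rightarrow> 'o set \<Rightarrow> 'm \<Rightarrow> 'm \<Rightarrow> 'o \<Rightarrow> 'm \<Rightarrow> 'm \<Rightarrow> bool" where
  "is_pullback C S f g P p q \<longleftrightarrow>
     f \<in> arrs C S \<and> g \<in> arrs C S \<and> Cod C f = Cod C g \<and> P \<in> S \<and>
     p \<in> hom C P (Dom C f) \<and> q \<in> hom C P (Dom C g) \<and> Comp C f p = Comp C g q \<and>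
     (\<forall>Q\<in>S. \<forall>u\<in>hom C Q (Dom C f). \<forall>v\<in>hom C Q (Dom C g). Comp C f u = Comp C g v \<longrightarrow>
        (\<exists>!h. h \<in> hom C Q P \<and> Comp C p h = u \<and> Comp C q h = v))"

definition finitely_complete :: "('o,'m) cat \<Rightarrow> 'o set \<Rightarrow> bool" where
  "finitely_complete C S \<longleftrightarrow> (\<exists>T. is_terminal C S T) \<and>
     (\<forall>f\<in>arrs C S. \<forall>g\<in>arrs C S. Cod C f = Cod C g \<longrightarrow> (\<exists>P p q. is_pullback C S f g P p q))"

definition is_product :: "('o,'m) cat \<Rightarrow> 'o set \<Rightarrow> 'o \<Rightarrow> 'o \<Rightarrow> 'o \<Rightarrow> 'm \<Rightarrow> 'm \<Rightarrow> bool" where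
  "is_product C S X Y P p1 p2 \<longleftrightarrow> X \<in> S \<and> Y \<in> S \<and> P \<in> S \<and>
     p1 \<in> hom C P X \<and> p2 \<in> hom C P Y \<and>
     (\<forall>Q\<in>S. \<forall>u\<in>hom C Q X. \<forall>v\<in>hom C Q Y.
        \<exists>!h. h \<in> hom C Q P \<and> Comp C p1 h = u \<and> Comp C p2 h = v)"

definition factorization_system :: "('o,'m) cat \<Rightarrow> 'o set \<Rightarrow> 'm set \<Rightarrow> 'm set \<Rightarrow> bool" where
  "factorization_system C S E M \<longleftrightarrow>
     E \<subseteq> arrs C S \<and> M \<subseteq> arrs C S \<and>
     {f \<in> arrs C S. is_iso C f} \<subseteq> E \<inter> M \<and>
     (\<forall>e\<in>E. \<forall>i\<in>arrs C S. is_iso C i \<and> Cod C i = Dom C e \<longrightarrow> Comp C e i \<in> E) \<and>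
     (\<forall>e\<in>E. \<forall>i\<in>arrs C S. is_iso C i \<and> Dom C i = Cod C e \<longrightarrow> Comp C i e \<in> E) \<and>
     (\<forall>m\<in>M. \<forall>i\<in>arrs C S. is_iso C i \<and> Cod C i = Dom C m \<longrightarrow> Comp C m i \<in> M) \<and>
     (\<forall>m\<in>M. \<forall>i\<in>arrs C S. is_iso C i \<and> Dom C i = Cod C m \<longrightarrow> Comp C i m \<in> M) \<and>
     (\<forall>f\<in>arrs C S. \<exists>e\<in>E. \<exists>m\<in>M. Cod C e = Dom C m \<and> f = Comp C m e) \<and>
     (\<forall>e\<in>E. \<forall>m\<in>M. \<forall>u\<in>arrs C S. \<forall>v\<in>arrs C S.
        Dom C u = Dom C e \<and> Cod C u = Dom C m \<and> Dom C v = Cod C e \<and> Cod C v = Cod C m \<and>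
        Comp C v e = Comp C m u \<longrightarrow>
        (\<exists>!d. d \<in> hom C (Cod C e) (Dom C m) \<and> Comp C d e = u \<and> Comp C m d = v))"

definition proper_factorization_system :: "('o,'m) cat \<Rightarrow> 'o set \<Rightarrow> 'm set \<Rightarrow> 'm set \<Rightarrow> bool" where
  "proper_factorization_system C S E M \<longleftrightarrow> factorization_system C S E M \<and>
     (\<forall>e\<in>E. is_epi C S e) \<and> (\<forall>m\<in>M. is_mono C S m)"

definition pullback_stable :: "('o,'m) cat \<Rightarrow> 'o set \<Rightarrow> 'm set \<Rightarrow> bool" where
  "pullback_stable C S E \<longleftrightarrow>
     (\<forall>f e P k q. e \<in> E \<and> is_pullback C S f e P k q \<longrightarrow> k \<in> E)"

definition sub :: "('o,'m) cat \<Rightarrow> 'm set \<Rightarrow> 'o \<Rightarrow> 'm set" where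
  "sub C M X = {m \<in> M. Cod C m = X}"

definition sub_le :: "('o,'m) cat \<Rightarrow> 'm \<Rightarrow> 'm \<Rightarrow> bool" where
  "sub_le C m n \<longleftrightarrow> (\<exists>j\<in>hom C (Dom C m) (Dom C n). m = Comp C n j)"

definition sub_eq :: "('o,'m) cat \<Rightarrow> 'm \<Rightarrow> 'm \<Rightarrow> bool" where
  "sub_eq C m n \<longleftrightarrow> sub_le C m n \<and> sub_le C n m"

text \<open>n is (a representative of) the image f(m): the M-part of an (E,M)-factorization of f o m.\<close>
definition is_image :: "('o,'m) cat \<Rightarrow> 'm set \<Rightarrow> 'm set \<Rightarrow> 'm \<Rightarrow> 'm \<Rightarrow> 'm \<Rightarrow> bool" where
  "is_image C E M f m n \<longleftrightarrow> n \<in> M \<and> Cod C n = Cod C f \<and>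
     (\<exists>e\<in>E. Dom C e = Dom C m \<and> Cod C e = Dom C n \<and> Comp C f m = Comp C n e)"

definition image :: "('o,'m) cat \<Rightarrow> 'm set \<Rightarrow> 'm set \<Rightarrow> 'm \<Rightarrow> 'm \<Rightarrow> 'm" where
  "image C E M f m = (SOME n. is_image C E M f m n)"

definition preimage :: "('o,'m) cat \<Rightarrow> 'o set \<Rightarrow> 'm \<Rightarrow> 'm \<Rightarrow> 'm" where
  "preimage C S f n = (SOME k. \<exists>P q. is_pullback C S f n P k q)"

definition closure_op :: "('o,'m) cat \<Rightarrow> 'o set \<Rightarrow> 'm set \<Rightarrow> 'm set \<Rightarrow> ('o \<Rightarrow> 'm \<Rightarrow> 'm) \<Rightarrow> bool" where
  "closure_op C S E M c \<longleftrightarrow>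
     (\<forall>X\<in>S. \<forall>m\<in>sub C M X. c X m \<in> sub C M X \<and> sub_le C m (c X m)) \<and>
     (\<forall>X\<in>S. \<forall>m\<in>sub C M X. \<forall>n\<in>sub C M X. sub_le C m n \<longrightarrow> sub_le C (c X m) (c X n)) \<and>
     (\<forall>f\<in>arrs C S. \<forall>m\<in>sub C M (Dom C f).
        sub_le C (image C E M f (c (Dom C f) m)) (c (Cod C f) (image C E M f m)))"

definition preserving :: "('o,'m) cat \<Rightarrow> 'm set \<Rightarrow> 'm set \<Rightarrow> ('o \<Rightarrow> 'm \<Rightarrow> 'm) \<Rightarrow> 'm \<Rightarrow> bool" where
  "preserving C E M d f \<longleftrightarrow> (\<forall>m\<in>sub C M (Dom C f).
     sub_eq C (image C E M f (d (Dom C f) m)) (d (Cod C f) (image C E M f m)))"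

definition compact :: "('o,'m) cat \<Rightarrow> 'o set \<Rightarrow> 'm set \<Rightarrow> 'm set \<Rightarrow> ('o \<Rightarrow> 'm \<Rightarrow> 'm) \<Rightarrow> 'o \<Rightarrow> bool" where
  "compact C S E M d X \<longleftrightarrow>
     (\<forall>Y\<in>S. \<forall>P p1 p2. is_product C S X Y P p1 p2 \<longrightarrow> preserving C E M d p2)"

definition is_reflection_arrow :: "('o,'m) cat \<Rightarrow> 'o set \<Rightarrow> 'm \<Rightarrow> bool" where
  "is_reflection_arrow C A u \<longleftrightarrow> u \<in> Arr C \<and> Cod C u \<in> A \<and>
     (\<forall>B\<in>A. \<forall>f\<in>hom C (Dom C u) B. \<exists>!g. g \<in> hom C (Cod C u) B \<and> Comp C g u = f)"

definition reflective :: "('o,'m) cat \<Rightarrow> 'o set \<Rightarrow> ('o \<Rightarrow> 'o) \<Rightarrow> ('o \<Rightarrow> 'm) \<Rightarrow> bool" where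
  "reflective C A R \<rho> \<longleftrightarrow> A \<subseteq> Obj C \<and>
     (\<forall>X\<in>Obj C. R X \<in> A \<and> \<rho> X \<in> hom C X (R X) \<and> is_reflection_arrow C A (\<rho> X))"

definition Rmor :: "('o,'m) cat \<Rightarrow> ('o \<Rightarrow> 'o) \<Rightarrow> ('o \<Rightarrow> 'm) \<Rightarrow> 'm \<Rightarrow> 'm" where
  "Rmor C R \<rho> f = (THE h. h \<in> hom C (R (Dom C f)) (R (Cod C f)) \<and>
       Comp C h (\<rho> (Dom C f)) = Comp C (\<rho> (Cod C f)) f)"

text \<open>c^rho_X(m) = rho_X^{-1}(c_{RX}(Rm)), with c_{RX}(g) := c_{RX}(g(1)).\<close>
definition lift_closure :: "('o,'m) cat \<Rightarrow> 'o set \<Rightarrow> 'm set \<Rightarrow> 'm set \<Rightarrow> ('o \<Rightarrow> 'o) \<Rightarrow> ('o \<Rightarrow> 'm)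
    \<Rightarrow> ('o \<Rightarrow> 'm \<Rightarrow> 'm) \<Rightarrow> 'o \<Rightarrow> 'm \<Rightarrow> 'm" where
  "lift_closure C A F N R \<rho> c X m =
     preimage C (Obj C) (\<rho> X)
       (c (R X) (image C F N (Rmor C R \<rho> m) (Id C (R (Dom C m)))))"

definition preserves_products_with :: "('o,'m) cat \<Rightarrow> 'o set \<Rightarrow> ('o \<Rightarrow> 'o) \<Rightarrow> ('o \<Rightarrow> 'm) \<Rightarrow> 'o \<Rightarrow> bool" where
  "preserves_products_with C A R \<rho> X \<longleftrightarrow>
     (\<forall>Y\<in>Obj C. \<forall>P p1 p2 Q q1 q2 u.
        is_product C (Obj C) X Y P p1 p2 \<and> is_product C A (R X) (R Y) Q q1 q2 \<and>
        u \<in> hom C P Q \<and> Comp C q1 u = Comp C (\<rho> X) p1 \<and> Comp C q2 u = Comp C (\<rho> Y) p2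
        \<longrightarrow> is_reflection_arrow C A u)"

end

theory Submission
  imports Defs
begin


locale setting =
  fixes C :: "('o,'m) cat" and A :: "'o set"
    and E M F N :: "'m set"
    and R :: "'o \<Rightarrow> 'o" and \<rho> :: "'o \<Rightarrow> 'm"
    and c :: "'o \<Rightarrow> 'm \<Rightarrow> 'm"
  assumes cat: "is_category C"
    and fcX: "finitely_complete C (Obj C)"
    and fcA: "finitely_complete C A"
    and EM: "proper_factorization_system C (Obj C) E M"
    and FN: "proper_factorization_system C A F N"
    and refl: "reflective C A R \<rho>"
    and Estable: "pullback_stable C (Obj C) E"
    and Neq: "N = {m \<in> M. Dom C m \<in> A \<and> Cod C m \<in> A}"
    and Erefl: "\<forall>Y\<in>Obj C. \<rho> Y \<in> E"
    and clo: "closure_op C A F N c"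
begin

abbreviation cmp (infixr "\<cdot>" 55) where "g \<cdot> f \<equiv> Comp C g f"
abbreviation "dm \<equiv> Dom C"
abbreviation "cd \<equiv> Cod C"
abbreviation "le \<equiv> sub_le C"

lemma hom_iff: "f \<in> hom C a b \<longleftrightarrow> f \<in> Arr C \<and> dm f = a \<and> cd f = b"
  by (simp add: hom_def)

lemma arr_obj: "f \<in> Arr C \<Longrightarrow> dm f \<in> Obj C \<and> cd f \<in> Obj C"
  using cat unfolding is_category_def by blast

lemma comp_simps[simp]:
  assumes "f \<in> Arr C" "g \<in> Arr C" "cd f = dm g"
  shows "g \<cdot> f \<in> Arr C" "dm (g \<cdot> f) = dm f" "cd (g \<cdot> f) = cd g"
  using cat assms unfolding is_category_def hom_def by blast+

lemma assoc[simp]: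
  assumes "f \<in> Arr C" "g \<in> Arr C" "h \<in> Arr C" "cd f = dm g" "cd g = dm h"
  shows "(h \<cdot> g) \<cdot> f = h \<cdot> (g \<cdot> f)"
  using cat assms unfolding is_category_def by metis

lemma id_simps[simp]:
  assumes "a \<in> Obj C"
  shows "Id C a \<in> Arr C" "dm (Id C a) = a" "cd (Id C a) = a"
  using cat assms unfolding is_category_def hom_def by blast+

lemma id_l[simp]: "f \<in> Arr C \<Longrightarrow> cd f = a \<Longrightarrow> Id C a \<cdot> f = f"
  using cat unfolding is_category_def by blast
lemma id_r[simp]: "f \<in> Arr C \<Longrightarrow> dm f = a \<Longrightarrow> f \<cdot> Id C a = f"
  using cat unfolding is_category_def by blast

lemma arrs_Obj[simp]: "arrs C (Obj C) = Arr C"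
  using arr_obj unfolding arrs_def by blast

lemma A_Obj: "A \<subseteq> Obj C" using refl unfolding reflective_def by blast

lemma RA: "X \<in> Obj C \<Longrightarrow> R X \<in> A" using refl unfolding reflective_def by blast
lemma rho_hom: "X \<in> Obj C \<Longrightarrow> \<rho> X \<in> hom C X (R X)" using refl unfolding reflective_def by blast
lemma rho_arr[simp]: "X \<in> Obj C \<Longrightarrow> \<rho> X \<in> Arr C" "X \<in> Obj C \<Longrightarrow> dm (\<rho> X) = X" "X \<in> Obj C \<Longrightarrow> cd (\<rho> X) = R X"
  using rho_hom by (auto simp: hom_iff)
lemma rho_refl: "X \<in> Obj C \<Longrightarrow> is_reflection_arrow C A (\<rho> X)" using refl unfolding reflective_def by blast
lemma rho_E: "X \<in> Obj C \<Longrightarrow> \<rho> X \<in> E" using Erefl by blast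
lemma AObj: "B \<in> A \<Longrightarrow> B \<in> Obj C" using A_Obj by blast

lemma refl_ex1:
  assumes "is_reflection_arrow C A u" "B \<in> A" "f \<in> Arr C" "dm f = dm u" "cd f = B"
  shows "\<exists>!g. g \<in> hom C (cd u) B \<and> g \<cdot> u = f"
proof -
  have "f \<in> hom C (dm u) B" using assms by (simp add: hom_iff)
  then show ?thesis using assms(1,2) unfolding is_reflection_arrow_def by blast
qed

lemma refl_ex:
  assumes "is_reflection_arrow C A u" "B \<in> A" "f \<in> Arr C" "dm f = dm u" "cd f = B"
  shows "\<exists>g. g \<in> Arr C \<and> dm g = cd u \<and> cd g = B \<and> g \<cdot> u = f"
  using refl_ex1[OF assms] by (auto simp: hom_iff)

lemma refl_uniq:
  assumes "is_reflection_arrow C A u" "B \<in> A" "g \<in> Arr C" "dm g = cd u" "cd g = B"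
    "h \<in> Arr C" "dm h = cd u" "cd h = B" "g \<cdot> u = h \<cdot> u"
  shows "g = h"
proof -
  have u: "u \<in> Arr C" using assms(1) unfolding is_reflection_arrow_def by blast
  have 1: "\<exists>!g'. g' \<in> hom C (cd u) B \<and> g' \<cdot> u = g \<cdot> u"
    using refl_ex1[OF assms(1,2)] assms u by simp
  have "g \<in> hom C (cd u) B" "h \<in> hom C (cd u) B" using assms by (auto simp: hom_iff)
  moreover obtain g' where "\<forall>y. y \<in> hom C (cd u) B \<and> y \<cdot> u = g \<cdot> u \<longrightarrow> y = g'" using 1 by blast
  ultimately show ?thesis using assms(9) by metis
qed

lemma refl_arr: "is_reflection_arrow C A u \<Longrightarrow> u \<in> Arr C \<and> cd u \<in> A"
  unfolding is_reflection_arrow_def by blast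


lemma EMfs: "factorization_system C (Obj C) E M" using EM unfolding proper_factorization_system_def by blast
lemma FNfs: "factorization_system C A F N" using FN unfolding proper_factorization_system_def by blast

lemma fs_sub: "factorization_system C S E' M' \<Longrightarrow> E' \<subseteq> arrs C S \<and> M' \<subseteq> arrs C S"
  unfolding factorization_system_def by (elim conjE) (rule conjI; assumption)
lemma fs_iso: "factorization_system C S E' M' \<Longrightarrow> {f \<in> arrs C S. is_iso C f} \<subseteq> E' \<inter> M'"
  unfolding factorization_system_def by (elim conjE) assumption
lemma fs_E_post: "factorization_system C S E' M' \<Longrightarrow> (\<forall>e\<in>E'. \<forall>i\<in>arrs C S. is_iso C i \<and> Dom C i = Cod C e \<longrightarrow> Comp C i e \<in> E')"
  unfolding factorization_system_def by (elim conjE) assumption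
lemma fs_M_pre: "factorization_system C S E' M' \<Longrightarrow> (\<forall>m\<in>M'. \<forall>i\<in>arrs C S. is_iso C i \<and> Cod C i = Dom C m \<longrightarrow> Comp C m i \<in> M')"
  unfolding factorization_system_def by (elim conjE) assumption
lemma fs_M_post: "factorization_system C S E' M' \<Longrightarrow> (\<forall>m\<in>M'. \<forall>i\<in>arrs C S. is_iso C i \<and> Dom C i = Cod C m \<longrightarrow> Comp C i m \<in> M')"
  unfolding factorization_system_def by (elim conjE) assumption
lemma fs_fact: "factorization_system C S E' M' \<Longrightarrow> (\<forall>f\<in>arrs C S. \<exists>e\<in>E'. \<exists>m\<in>M'. Cod C e = Dom C m \<and> f = Comp C m e)"
  unfolding factorization_system_def by (elim conjE) assumption
lemma fs_diag: "factorization_system C S E' M' \<Longrightarrow> (\<forall>e\<in>E'. \<forall>m\<in>M'. \<forall>u\<in>arrs C S. \<forall>v\<in>arrs C S.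
        Dom C u = Dom C e \<and> Cod C u = Dom C m \<and> Dom C v = Cod C e \<and> Cod C v = Cod C m \<and>
        Comp C v e = Comp C m u \<longrightarrow>
        (\<exists>!d. d \<in> hom C (Cod C e) (Dom C m) \<and> Comp C d e = u \<and> Comp C m d = v))"
  unfolding factorization_system_def by (elim conjE) assumption

lemma E_arr: "e \<in> E \<Longrightarrow> e \<in> Arr C" using fs_sub[OF EMfs] by auto
lemma M_arr: "m \<in> M \<Longrightarrow> m \<in> Arr C" using fs_sub[OF EMfs] by auto
lemma F_arrs: "e \<in> F \<Longrightarrow> e \<in> Arr C \<and> dm e \<in> A \<and> cd e \<in> A" using fs_sub[OF FNfs] unfolding arrs_def by auto
lemma N_arrs: "e \<in> N \<Longrightarrow> e \<in> Arr C \<and> dm e \<in> A \<and> cd e \<in> A" using fs_sub[OF FNfs] unfolding arrs_def by auto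
lemma NM: "N \<subseteq> M" using Neq by auto
lemma N_M: "n \<in> N \<Longrightarrow> n \<in> M" using NM by auto
lemma inN: "m \<in> M \<Longrightarrow> dm m \<in> A \<Longrightarrow> cd m \<in> A \<Longrightarrow> m \<in> N" using Neq by auto

lemma iso_arr: "is_iso C f \<Longrightarrow> f \<in> Arr C" unfolding is_iso_def by blast
lemma iso_EM: "is_iso C f \<Longrightarrow> f \<in> E \<and> f \<in> M"
  using fs_iso[OF EMfs] iso_arr by auto
lemma E_iso_post: "e \<in> E \<Longrightarrow> is_iso C i \<Longrightarrow> dm i = cd e \<Longrightarrow> i \<cdot> e \<in> E"
  using fs_E_post[OF EMfs] iso_arr by auto
lemma M_iso_pre: "m \<in> M \<Longrightarrow> is_iso C i \<Longrightarrow> cd i = dm m \<Longrightarrow> m \<cdot> i \<in> M"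
  using fs_M_pre[OF EMfs] iso_arr by auto
lemma M_iso_post: "m \<in> M \<Longrightarrow> is_iso C i \<Longrightarrow> dm i = cd m \<Longrightarrow> i \<cdot> m \<in> M"
  using fs_M_post[OF EMfs] iso_arr by auto
lemma factEM: "f \<in> Arr C \<Longrightarrow> \<exists>e m. e \<in> E \<and> m \<in> M \<and> cd e = dm m \<and> f = m \<cdot> e"
  using fs_fact[OF EMfs] unfolding arrs_Obj by blast
lemma factFN: "f \<in> Arr C \<Longrightarrow> dm f \<in> A \<Longrightarrow> cd f \<in> A \<Longrightarrow> \<exists>e m. e \<in> F \<and> m \<in> N \<and> cd e = dm m \<and> f = m \<cdot> e"
  using fs_fact[OF FNfs] unfolding arrs_def by blast

lemma diagEM:
  assumes "e \<in> E" "m \<in> M" "a \<in> Arr C" "b \<in> Arr C" "dm a = cd e" "cd a = cd m" "dm b = dm e" "cd b = dm m"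
    "a \<cdot> e = m \<cdot> b"
  shows "\<exists>d. d \<in> Arr C \<and> dm d = cd e \<and> cd d = dm m \<and> d \<cdot> e = b \<and> m \<cdot> d = a"
proof -
  have "\<exists>!d. d \<in> hom C (cd e) (dm m) \<and> d \<cdot> e = b \<and> m \<cdot> d = a"
    using fs_diag[OF EMfs] assms(1,2) assms(3-) by simp
  then show ?thesis by (auto simp: hom_iff)
qed

lemma diagFN:
  assumes "e \<in> F" "m \<in> N" "a \<in> Arr C" "b \<in> Arr C" "dm a = cd e" "cd a = cd m" "dm b = dm e" "cd b = dm m"
    "a \<cdot> e = m \<cdot> b"
  shows "\<exists>d. d \<in> Arr C \<and> dm d = cd e \<and> cd d = dm m \<and> d \<cdot> e = b \<and> m \<cdot> d = a"
proof -
  have ar: "a \<in> arrs C A" "b \<in> arrs C A" using assms F_arrs N_arrs unfolding arrs_def by auto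
  have "\<exists>!d. d \<in> hom C (cd e) (dm m) \<and> d \<cdot> e = b \<and> m \<cdot> d = a"
    using fs_diag[OF FNfs] assms(1,2) ar assms(5-) by simp
  then show ?thesis by (auto simp: hom_iff)
qed

lemma M_mono:
  assumes "m \<in> M" "g \<in> Arr C" "h \<in> Arr C" "cd g = dm m" "cd h = dm m" "dm g = dm h" "m \<cdot> g = m \<cdot> h"
  shows "g = h"
proof -
  have "is_mono C (Obj C) m" using EM assms(1) unfolding proper_factorization_system_def by blast
  then show ?thesis using assms unfolding is_mono_def arrs_Obj by blast
qed

lemma E_epi:
  assumes "e \<in> E" "g \<in> Arr C" "h \<in> Arr C" "dm g = cd e" "dm h = cd e" "cd g = cd h" "g \<cdot> e = h \<cdot> e"
  shows "g = h"
proof -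
  have "is_epi C (Obj C) e" using EM assms(1) unfolding proper_factorization_system_def by blast
  then show ?thesis using assms unfolding is_epi_def arrs_Obj by blast
qed

lemma isoI:
  assumes "f \<in> Arr C" "g \<in> Arr C" "dm g = cd f" "cd g = dm f" "g \<cdot> f = Id C (dm f)" "f \<cdot> g = Id C (cd f)"
  shows "is_iso C f"
  unfolding is_iso_def hom_def using assms by blast

lemma isoE:
  assumes "is_iso C f"
  obtains g where "f \<in> Arr C" "g \<in> Arr C" "dm g = cd f" "cd g = dm f" "g \<cdot> f = Id C (dm f)" "f \<cdot> g = Id C (cd f)"
  using assms unfolding is_iso_def hom_def by blast

lemma iso_cancel:
  assumes "is_iso C i" "a \<in> Arr C" "b \<in> Arr C" "cd a = dm i" "cd b = dm i" "i \<cdot> a = i \<cdot> b"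
  shows "a = b"
proof -
  obtain j where j: "i \<in> Arr C" "j \<in> Arr C" "dm j = cd i" "cd j = dm i" "j \<cdot> i = Id C (dm i)" "i \<cdot> j = Id C (cd i)"
    using isoE[OF assms(1)] by blast
  have "a = (j \<cdot> i) \<cdot> a" using j assms by (simp del: assoc)
  also have "\<dots> = j \<cdot> (i \<cdot> a)" by (rule assoc) (use j assms in simp_all)
  also have "\<dots> = j \<cdot> (i \<cdot> b)" using assms by simp
  also have "\<dots> = (j \<cdot> i) \<cdot> b" by (rule sym, rule assoc) (use j assms in simp_all)
  also have "\<dots> = b" using j assms by (simp del: assoc)
  finally show ?thesis .
qed

end

context setting begin

lemma le_iff: "le m n \<longleftrightarrow> (\<exists>j. j \<in> Arr C \<and> dm j = dm m \<and> cd j = dm n \<and> m = n \<cdot> j)"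
  unfolding sub_le_def hom_def by blast

lemma le_arr: "le m n \<Longrightarrow> n \<in> Arr C \<Longrightarrow> m \<in> Arr C \<and> cd m = cd n"
  unfolding le_iff by auto

lemma le_refl: "m \<in> Arr C \<Longrightarrow> le m m"
proof -
  assume m: "m \<in> Arr C"
  have o: "dm m \<in> Obj C" using arr_obj m by blast
  show ?thesis unfolding le_iff
  proof (rule exI[of _ "Id C (dm m)"], intro conjI)
    show "Id C (dm m) \<in> Arr C" "dm (Id C (dm m)) = dm m" "cd (Id C (dm m)) = dm m"
      using id_simps[OF o] by auto
    show "m = m \<cdot> Id C (dm m)" using id_r[OF m HOL.refl] by simp
  qed
qed

lemma le_iff2: "n \<in> Arr C \<Longrightarrow> le m n \<longleftrightarrow> (\<exists>j. j \<in> Arr C \<and> cd j = dm n \<and> m = n \<cdot> j)"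
  unfolding le_iff by auto

lemma le_compI: "b \<in> Arr C \<Longrightarrow> j \<in> Arr C \<Longrightarrow> cd j = dm b \<Longrightarrow> le (b \<cdot> j) b"
  unfolding le_iff by (intro exI[of _ j]) simp

lemma le_trans: assumes "le a b" "le b z" "z \<in> Arr C" shows "le a z"
proof -
  obtain j' where j': "j' \<in> Arr C" "cd j' = dm z" "b = z \<cdot> j'" using assms(2,3) le_iff2 by blast
  have b: "b \<in> Arr C" "dm b = dm j'" using j' assms(3) by simp_all
  obtain j where j: "j \<in> Arr C" "cd j = dm b" "a = b \<cdot> j" using assms(1) b le_iff2 by blast
  have "a = z \<cdot> (j' \<cdot> j)" unfolding j(3) j'(3) using j(1,2) j'(1,2) assms(3) b(2) by simp
  then show ?thesis using le_compI[of z "j' \<cdot> j"] j(1,2) j'(1,2) assms(3) b(2) by simp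
qed

lemma le_post: assumes "le a b" "g \<in> Arr C" "b \<in> Arr C" "cd b = dm g" shows "le (g \<cdot> a) (g \<cdot> b)"
proof -
  obtain j where j: "j \<in> Arr C" "cd j = dm b" "a = b \<cdot> j" using assms(1,3) le_iff2 by blast
  have "g \<cdot> a = (g \<cdot> b) \<cdot> j" unfolding j(3) using j(1,2) assms(2-) by simp
  then show ?thesis using le_compI[of "g \<cdot> b" j] j(1,2) assms(2-) by simp
qed

lemma le_pre: assumes "le a b" "h \<in> Arr C" "b \<in> Arr C" "cd h = dm a" shows "le (a \<cdot> h) b"
proof -
  obtain j where j: "j \<in> Arr C" "cd j = dm b" "a = b \<cdot> j" using assms(1,3) le_iff2 by blast
  have hj: "cd h = dm j" using assms(4) j assms(3) by simp
  have "a \<cdot> h = b \<cdot> (j \<cdot> h)" unfolding j(3) using j(1,2) assms(2,3) hj by simp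
  then show ?thesis using le_compI[of b "j \<cdot> h"] j(1,2) assms(2,3) hj by simp
qed

lemma sub_eq_iff: "sub_eq C a b \<longleftrightarrow> le a b \<and> le b a" unfolding sub_eq_def by simp

lemma sub_eq_trans: "sub_eq C a b \<Longrightarrow> sub_eq C b z \<Longrightarrow> a \<in> Arr C \<Longrightarrow> z \<in> Arr C \<Longrightarrow> b \<in> Arr C \<Longrightarrow> sub_eq C a z"
  unfolding sub_eq_iff using le_trans[of a b z] le_trans[of z b a] by blast
lemma sub_eq_sym: "sub_eq C a b \<Longrightarrow> sub_eq C b a" unfolding sub_eq_iff by blast
lemma sub_eq_refl: "a \<in> Arr C \<Longrightarrow> sub_eq C a a" unfolding sub_eq_iff using le_refl by blast

definition LST :: "'m set \<Rightarrow> 'm \<Rightarrow> 'm \<Rightarrow> bool" where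
  "LST K h k \<longleftrightarrow> k \<in> K \<and> cd k = cd h \<and> le h k \<and> (\<forall>n\<in>K. cd n = cd h \<longrightarrow> le h n \<longrightarrow> le k n)"

lemma M_sub: "M \<subseteq> Arr C" using M_arr by blast
lemma N_sub: "N \<subseteq> Arr C" using N_arrs by blast

lemma LST_uniq: "LST K h k1 \<Longrightarrow> LST K h k2 \<Longrightarrow> sub_eq C k1 k2"
  unfolding LST_def sub_eq_iff by blast

lemma LST_eq: assumes "LST K h k" "sub_eq C k k'" "k' \<in> K" "K \<subseteq> Arr C" shows "LST K h k'"
proof -
  have k: "k \<in> Arr C" "k' \<in> Arr C" using assms unfolding LST_def by auto
  have c: "cd k' = cd k" using le_arr assms(2) k unfolding sub_eq_iff by blast
  have "le h k" "le k k'" "le k' k" using assms unfolding LST_def sub_eq_iff by auto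
  then have "le h k'" using le_trans[of h k k'] k by blast
  moreover have "le k' n" if "n \<in> K" "cd n = cd h" "le h n" for n
  proof -
    have "le k n" using assms(1) that unfolding LST_def by blast
    then show ?thesis using le_trans[of k' k n] \<open>le k' k\<close> that assms(4) by blast
  qed
  ultimately show ?thesis using assms c unfolding LST_def by simp
qed

lemma LST_cong: assumes "LST K h k" "sub_eq C h h'" "h \<in> Arr C" "h' \<in> Arr C" "K \<subseteq> Arr C" shows "LST K h' k"
proof -
  have c: "cd h' = cd h" using le_arr assms unfolding sub_eq_iff by blast
  have hh: "le h' h" "le h h'" "le h k" "k \<in> K" using assms unfolding LST_def sub_eq_iff by auto
  then have "le h' k" using le_trans[of h' h k] assms(5) by blast
  moreover have "le k n" if "n \<in> K" "cd n = cd h'" "le h' n" for n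
  proof -
    have "le h n" using le_trans[of h h' n] hh that assms(5) by blast
    then show ?thesis using assms(1) that c unfolding LST_def by auto
  qed
  ultimately show ?thesis using assms c unfolding LST_def by simp
qed

lemma LST_self: "k \<in> K \<Longrightarrow> K \<subseteq> Arr C \<Longrightarrow> LST K k k"
  unfolding LST_def using le_refl by blast

lemma LST_preE: assumes "LST K h k" "K \<subseteq> M" "e \<in> E" "h \<in> Arr C" "cd e = dm h"
  shows "LST K (h \<cdot> e) k"
proof -
  have e: "e \<in> Arr C" using E_arr assms by blast
  have k: "k \<in> Arr C" using assms M_arr unfolding LST_def by blast
  have "le (h \<cdot> e) k" using assms e k le_pre unfolding LST_def by blast
  moreover have "le k n" if n: "n \<in> K" "cd n = cd (h \<cdot> e)" "le (h \<cdot> e) n" for n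
  proof -
    have nM: "n \<in> M" using n assms by blast
    have na: "n \<in> Arr C" using nM M_arr by blast
    obtain j where j: "j \<in> Arr C" "cd j = dm n" "h \<cdot> e = n \<cdot> j" using n(3) na le_iff2 by blast
    have dj: "dm j = dm e" using arg_cong[OF j(3), of dm] j(1,2) na e assms(5) assms(4) by simp
    have cn: "cd n = cd h" using n(2) e assms(4,5) by simp
    obtain d where d: "d \<in> Arr C" "dm d = cd e" "cd d = dm n" "n \<cdot> d = h"
      using diagEM[OF assms(3) nM assms(4) j(1)] j(2,3) dj cn assms(5) by auto
    have "le h n" using le_compI[OF na d(1)] d(3) unfolding d(4) by simp
    then show ?thesis using assms(1) n cn unfolding LST_def by auto
  qed
  ultimately show ?thesis using assms e unfolding LST_def by auto
qed

lemma FE: "F \<subseteq> E"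
proof
  fix f assume f: "f \<in> F"
  have fa: "f \<in> Arr C" "dm f \<in> A" "cd f \<in> A" using F_arrs f by auto
  obtain e m where em: "e \<in> E" "m \<in> M" "cd e = dm m" "f = m \<cdot> e" using factEM fa by blast
  have ea: "e \<in> Arr C" "m \<in> Arr C" using em E_arr M_arr by auto
  have cdm: "cd m = cd f" "dm e = dm f" using em(3,4) ea by simp_all
  obtain Z where mZ: "dm m = Z" by blast
  have Z: "Z \<in> Obj C" using ea arr_obj mZ by auto
  obtain m' where m': "m' \<in> Arr C" "dm m' = R Z" "cd m' = cd m" "m' \<cdot> \<rho> Z = m"
    using refl_ex[OF rho_refl[OF Z], of "cd f" m] fa ea cdm Z mZ by auto
  obtain d where d: "d \<in> Arr C" "dm d = R Z" "cd d = Z" "d \<cdot> \<rho> Z = Id C Z" "m \<cdot> d = m'"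
    using diagEM[OF rho_E[OF Z] em(2) m'(1), of "Id C Z"] m'(1,2,3,4) Z mZ ea by auto
  have rd: "\<rho> Z \<cdot> d = Id C (R Z)"
  proof (rule refl_uniq[OF rho_refl[OF Z] RA[OF Z]])
    have "(\<rho> Z \<cdot> d) \<cdot> \<rho> Z = \<rho> Z \<cdot> (d \<cdot> \<rho> Z)" using d(1,2,3) Z by simp
    also have "\<dots> = \<rho> Z" unfolding d(4) using Z by simp
    also have "\<dots> = Id C (R Z) \<cdot> \<rho> Z" using Z by simp
    finally show "(\<rho> Z \<cdot> d) \<cdot> \<rho> Z = Id C (R Z) \<cdot> \<rho> Z" .
  qed (use d(1,2,3) Z RA AObj in auto)
  have isod: "is_iso C d" using d(1,2,3,4) rd Z by (intro isoI[of d "\<rho> Z"]) auto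
  have isor: "is_iso C (\<rho> Z)" using d(1,2,3,4) rd Z by (intro isoI[of "\<rho> Z" d]) auto
  have m'M: "m' \<in> M" using M_iso_pre[OF em(2) isod] d(3) mZ unfolding d(5) by auto
  have m'N: "m' \<in> N" using inN[OF m'M] m'(2,3) RA Z fa cdm by simp
  obtain e' where e'_def: "e' = \<rho> Z \<cdot> e" by blast
  have e'a: "e' \<in> Arr C" "dm e' = dm f" "cd e' = R Z" using e'_def ea em(3) Z mZ cdm by auto
  have fe: "f = m' \<cdot> e'"
  proof -
    have "m' \<cdot> e' = (m' \<cdot> \<rho> Z) \<cdot> e" unfolding e'_def using m'(1,2) ea em(3) Z mZ by simp
    then show ?thesis unfolding m'(4) em(4) by simp
  qed
  have sq: "Id C (cd f) \<cdot> f = m' \<cdot> e'" using fa(1) fe by simp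
  obtain d' where d': "d' \<in> Arr C" "dm d' = cd f" "cd d' = dm m'" "d' \<cdot> f = e'" "m' \<cdot> d' = Id C (cd f)"
    using diagFN[OF f m'N _ _ _ _ _ _ sq] fa(1,3) e'a m'(1,2,3) cdm AObj by auto
  have "m' \<cdot> (d' \<cdot> m') = (m' \<cdot> d') \<cdot> m'" using d'(1,2,3) m'(1,3) cdm by simp
  also have "\<dots> = m'" unfolding d'(5) using m'(1,3) cdm by simp
  also have "\<dots> = m' \<cdot> Id C (dm m')" using m'(1) by simp
  finally have "d' \<cdot> m' = Id C (dm m')" using M_mono[OF m'M] d'(1,2,3) m'(1,3) cdm
    by (simp add: arr_obj)
  then have isom': "is_iso C m'" using d'(1,2,3,5) m'(1,3) cdm by (intro isoI[of m' d']) auto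
  have "e' \<in> E" unfolding e'_def using E_iso_post[OF em(1) isor] Z mZ em(3) by simp
  then show "f \<in> E" using fe E_iso_post[of e' m'] isom' m'(2) e'a by auto
qed

lemma F_E: "f \<in> F \<Longrightarrow> f \<in> E" using FE by blast

end

context setting begin

lemma image_C:
  assumes "f \<in> Arr C" "m \<in> Arr C" "cd m = dm f"
  shows "is_image C E M f m (image C E M f m)"
proof -
  have fm: "f \<cdot> m \<in> Arr C" using assms by simp
  obtain e n where en: "e \<in> E" "n \<in> M" "cd e = dm n" "f \<cdot> m = n \<cdot> e" using factEM[OF fm] by blast
  have a: "e \<in> Arr C" "n \<in> Arr C" using en E_arr M_arr by auto
  have c1: "cd (f \<cdot> m) = cd f" "dm (f \<cdot> m) = dm m" using assms by simp_all
  have c2: "cd (n \<cdot> e) = cd n" "dm (n \<cdot> e) = dm e" using a en(3) by simp_all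
  have "is_image C E M f m n" unfolding is_image_def using en c1 c2 by metis
  then show ?thesis unfolding image_def by (rule someI)
qed

lemma image_C_props:
  assumes "f \<in> Arr C" "m \<in> Arr C" "cd m = dm f"
  obtains e where "image C E M f m \<in> M" "cd (image C E M f m) = cd f" "e \<in> E" "dm e = dm m"
     "cd e = dm (image C E M f m)" "f \<cdot> m = image C E M f m \<cdot> e"
  using image_C[OF assms] unfolding is_image_def by blast

lemma image_C_LST:
  assumes "f \<in> Arr C" "m \<in> Arr C" "cd m = dm f"
  shows "LST M (f \<cdot> m) (image C E M f m)"
proof -
  obtain e where e: "image C E M f m \<in> M" "e \<in> E" "cd e = dm (image C E M f m)"
     "f \<cdot> m = image C E M f m \<cdot> e" using image_C_props[OF assms] by metis
  have "LST M (image C E M f m \<cdot> e) (image C E M f m)"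
    using LST_preE[OF LST_self[OF e(1) M_sub] _ e(2)] e(1,3) M_arr by blast
  then show ?thesis using e(4) by simp
qed

lemma image_A:
  assumes "f \<in> Arr C" "k \<in> Arr C" "cd k = dm f" "dm k \<in> A" "cd f \<in> A"
  shows "is_image C F N f k (image C F N f k)"
proof -
  have fm: "f \<cdot> k \<in> Arr C" using assms by simp
  have c1: "cd (f \<cdot> k) = cd f" "dm (f \<cdot> k) = dm k" using assms by simp_all
  obtain e n where en: "e \<in> F" "n \<in> N" "cd e = dm n" "f \<cdot> k = n \<cdot> e"
    using factFN[OF fm] c1 assms by auto
  have a: "e \<in> Arr C" "n \<in> Arr C" using en F_arrs N_arrs by auto
  have c2: "cd (n \<cdot> e) = cd n" "dm (n \<cdot> e) = dm e" using a en(3) by simp_all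
  have "is_image C F N f k n" unfolding is_image_def using en c1 c2 by metis
  then show ?thesis unfolding image_def by (rule someI)
qed

lemma image_A_props:
  assumes "f \<in> Arr C" "k \<in> Arr C" "cd k = dm f" "dm k \<in> A" "cd f \<in> A"
  obtains e where "image C F N f k \<in> N" "cd (image C F N f k) = cd f" "e \<in> F" "dm e = dm k"
     "cd e = dm (image C F N f k)" "f \<cdot> k = image C F N f k \<cdot> e"
  using image_A[OF assms] unfolding is_image_def by blast

lemma image_A_LST:
  assumes "f \<in> Arr C" "k \<in> Arr C" "cd k = dm f" "dm k \<in> A" "cd f \<in> A"
  shows "LST N (f \<cdot> k) (image C F N f k)"
proof -
  obtain e where e: "image C F N f k \<in> N" "e \<in> F" "cd e = dm (image C F N f k)"
     "f \<cdot> k = image C F N f k \<cdot> e" using image_A_props[OF assms] by metis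
  have "LST N (image C F N f k \<cdot> e) (image C F N f k)"
    using LST_preE[OF LST_self[OF e(1) N_sub] NM F_E[OF e(2)]] e(1,3) N_arrs by blast
  then show ?thesis using e(4) by simp
qed

lemma LST_N_arr: assumes "LST N h k" shows "k \<in> N \<and> k \<in> Arr C \<and> cd k = cd h \<and> dm k \<in> A \<and> cd h \<in> A"
proof -
  have 1: "k \<in> N" "cd k = cd h" using assms unfolding LST_def by auto
  have 2: "k \<in> Arr C" "dm k \<in> A" "cd k \<in> A" using N_arrs[OF 1(1)] by auto
  show ?thesis using 1 2 by simp
qed

lemma LST_decomp:
  assumes "h \<in> Arr C" "cd h \<in> A"
  obtains hb k f0 where "hb \<in> Arr C" "dm hb = R (dm h)" "cd hb = cd h" "hb \<cdot> \<rho> (dm h) = h"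
    "k \<in> N" "f0 \<in> F" "cd f0 = dm k" "hb = k \<cdot> f0" "LST N h k"
proof -
  obtain Z where Z0: "dm h = Z" by blast
  have Z: "Z \<in> Obj C" using arr_obj assms Z0 by auto
  obtain hb where hb: "hb \<in> Arr C" "dm hb = R Z" "cd hb = cd h" "hb \<cdot> \<rho> Z = h"
    using refl_ex[OF rho_refl[OF Z] assms(2) assms(1)] Z Z0 by auto
  obtain f0 k where kf: "f0 \<in> F" "k \<in> N" "cd f0 = dm k" "hb = k \<cdot> f0"
    using factFN[OF hb(1)] hb(2,3) assms(2) RA[OF Z] by auto
  have ka: "k \<in> Arr C" "f0 \<in> Arr C" using kf N_arrs F_arrs by auto
  have t: "cd f0 = dm k" "cd (k \<cdot> f0) = cd k" "dm (k \<cdot> f0) = dm f0" using ka kf(3) by simp_all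
  have "LST N (k \<cdot> f0) k"
    using LST_preE[OF LST_self[OF kf(2) N_sub] NM F_E[OF kf(1)] ka(1) t(1)] .
  then have "LST N ((k \<cdot> f0) \<cdot> \<rho> Z) k"
    by (rule LST_preE[OF _ NM rho_E[OF Z]]) (use ka t hb(2) kf(4) Z in simp_all)
  then have "LST N h k" using hb(4) kf(4) by simp
  then show ?thesis by (rule that[unfolded Z0, OF hb kf(2,1,3,4)])
qed

lemma LST_ex: "h \<in> Arr C \<Longrightarrow> cd h \<in> A \<Longrightarrow> \<exists>k. LST N h k"
  using LST_decomp by metis

lemma LST_unE:
  assumes "LST N (h \<cdot> e) k" "e \<in> E" "h \<in> Arr C" "cd e = dm h" "cd h \<in> A"
  shows "LST N h k"
proof -
  obtain k' where k': "LST N h k'" using LST_ex assms by blast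
  have "LST N (h \<cdot> e) k'" using LST_preE[OF k' NM assms(2,3,4)] .
  then have "sub_eq C k' k" using LST_uniq assms(1) by blast
  then show ?thesis using LST_eq[OF k' _ _ N_sub] assms(1) unfolding LST_def by blast
qed

lemma LST_comp:
  assumes "LST N h k" "h \<in> Arr C" "g \<in> Arr C" "dm g = cd h" "cd g \<in> A"
  shows "LST N (g \<cdot> h) (image C F N g k)"
proof -
  have hA: "cd h \<in> A" and k: "k \<in> N" "k \<in> Arr C" "cd k = cd h" "dm k \<in> A"
    using LST_N_arr[OF assms(1)] by auto
  obtain Z where Z0: "dm h = Z" by blast
  obtain hb k' f0 where d: "hb \<in> Arr C" "dm hb = R Z" "cd hb = cd h" "hb \<cdot> \<rho> Z = h"
    "k' \<in> N" "f0 \<in> F" "cd f0 = dm k'" "hb = k' \<cdot> f0" "LST N h k'"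
    using LST_decomp[OF assms(2) hA] unfolding Z0 by blast
  have k': "k' \<in> Arr C" "cd k' = cd h" "dm k' \<in> A" using LST_N_arr[OF d(9)] by auto
  have f0: "f0 \<in> Arr C" using F_arrs d(6) by blast
  have kk: "le k k'" using LST_uniq[OF assms(1) d(9)] unfolding sub_eq_iff by blast
  have Z: "Z \<in> Obj C" using arr_obj assms(2) Z0 by blast
  let ?I = "image C F N g k"
  have I: "LST N (g \<cdot> k) ?I" using image_A_LST[OF assms(3) k(2)] k assms(4,5) by simp
  have gk: "g \<cdot> k \<in> Arr C" using assms k by simp
  have lhk: "le h k" using assms(1) unfolding LST_def by blast
  have "le (g \<cdot> h) (g \<cdot> k)" using le_post[OF lhk assms(3) k(2)] k assms by simp
  then have le1: "le (g \<cdot> h) ?I" using le_trans[of "g \<cdot> h" "g \<cdot> k" ?I] I N_arrs unfolding LST_def by blast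
  have least: "le ?I n" if n: "n \<in> N" "cd n = cd (g \<cdot> h)" "le (g \<cdot> h) n" for n
  proof -
    have na: "n \<in> Arr C" "dm n \<in> A" "cd n = cd g" using n N_arrs assms by auto
    obtain j where j: "j \<in> Arr C" "cd j = dm n" "g \<cdot> h = n \<cdot> j" using n(3) na le_iff2 by blast
    have dj: "dm j = Z" using arg_cong[OF j(3), of dm] j(1,2) na assms Z0 by simp
    obtain jb where jb: "jb \<in> Arr C" "dm jb = R Z" "cd jb = dm n" "jb \<cdot> \<rho> Z = j"
      using refl_ex[OF rho_refl[OF Z] na(2) j(1)] dj j(2) Z by auto
    have e1: "(n \<cdot> jb) \<cdot> \<rho> Z = (g \<cdot> hb) \<cdot> \<rho> Z"
    proof -
      have "(n \<cdot> jb) \<cdot> \<rho> Z = n \<cdot> j" unfolding jb(4)[symmetric] using na jb(1,2,3) Z by simp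
      also have "\<dots> = g \<cdot> h" using j(3) by simp
      also have "\<dots> = (g \<cdot> hb) \<cdot> \<rho> Z" using assms d(1,2,3,4) Z by simp
      finally show ?thesis .
    qed
    have e2: "n \<cdot> jb = g \<cdot> hb"
      using refl_uniq[OF rho_refl[OF Z] assms(5) _ _ _ _ _ _ e1] na jb(1,2,3) assms d(1,2,3) Z by simp
    have e3: "(g \<cdot> k') \<cdot> f0 = n \<cdot> jb" unfolding e2 d(8) using assms(3,4) k' f0 d(7) by simp
    obtain dd where dd: "dd \<in> Arr C" "cd dd = dm n" "n \<cdot> dd = g \<cdot> k'"
      using diagFN[OF d(6) n(1) _ jb(1) _ _ _ _ e3] assms(3,4) k' f0 d(7) jb(2,3) na d(1,2,8) by auto
    have "le (g \<cdot> k') n" using le_compI[OF na(1) dd(1,2)] unfolding dd(3) .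
    moreover have "le (g \<cdot> k) (g \<cdot> k')" using le_post[OF kk assms(3) k'(1)] k' assms(4) by simp
    ultimately have "le (g \<cdot> k) n" using le_trans[of "g \<cdot> k" "g \<cdot> k'" n] na by blast
    moreover have "cd (g \<cdot> k) = cd g" using assms k by simp
    ultimately show ?thesis using I n(1) na(3) unfolding LST_def by metis
  qed
  have "?I \<in> N" "cd ?I = cd (g \<cdot> h)" using I assms k unfolding LST_def by auto
  then show ?thesis unfolding LST_def using le1 least by blast
qed

end

context setting begin

abbreviation "pb \<equiv> is_pullback C (Obj C)"

lemma assoc':
  assumes "f \<in> Arr C" "g \<in> Arr C" "h \<in> Arr C" "cd f = dm g" "cd g = dm h"
  shows "h \<cdot> (g \<cdot> f) = (h \<cdot> g) \<cdot> f"
  using assoc[OF assms] by simp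

lemma pb_parts:
  assumes "pb a n P p q"
  shows "a \<in> Arr C" "n \<in> Arr C" "cd a = cd n" "P \<in> Obj C" "p \<in> Arr C" "dm p = P" "cd p = dm a"
    "q \<in> Arr C" "dm q = P" "cd q = dm n" "a \<cdot> p = n \<cdot> q"
  using assms unfolding is_pullback_def hom_iff arrs_Obj by auto

lemma pb_univ:
  assumes "pb a n P p q" "z \<in> Arr C" "y \<in> Arr C" "dm z = dm y" "cd z = dm a" "cd y = dm n" "a \<cdot> z = n \<cdot> y"
  shows "\<exists>h. h \<in> Arr C \<and> dm h = dm z \<and> cd h = P \<and> p \<cdot> h = z \<and> q \<cdot> h = y"
proof -
  have "dm z \<in> Obj C" using arr_obj assms(2) by blast
  moreover have "z \<in> hom C (dm z) (dm a)" "y \<in> hom C (dm z) (dm n)" using assms by (auto simp: hom_iff)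
  ultimately have "\<exists>!h. h \<in> hom C (dm z) P \<and> p \<cdot> h = z \<and> q \<cdot> h = y"
    using assms(1,7) unfolding is_pullback_def by blast
  then show ?thesis unfolding hom_iff by blast
qed

lemma pb_uniq:
  assumes "pb a n P p q" "h1 \<in> Arr C" "h2 \<in> Arr C" "dm h1 = dm h2" "cd h1 = P" "cd h2 = P"
    "p \<cdot> h1 = p \<cdot> h2" "q \<cdot> h1 = q \<cdot> h2"
  shows "h1 = h2"
proof -
  note pp = pb_parts[OF assms(1)]
  have o: "dm h1 \<in> Obj C" using arr_obj assms(2) by blast
  have z: "p \<cdot> h1 \<in> hom C (dm h1) (dm a)" "q \<cdot> h1 \<in> hom C (dm h1) (dm n)"
    using assms pp by (auto simp: hom_iff)
  have eq: "a \<cdot> (p \<cdot> h1) = n \<cdot> (q \<cdot> h1)"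
  proof -
    have "a \<cdot> (p \<cdot> h1) = (a \<cdot> p) \<cdot> h1" by (rule assoc') (use pp assms in simp_all)
    also have "\<dots> = (n \<cdot> q) \<cdot> h1" using pp(11) by simp
    also have "\<dots> = n \<cdot> (q \<cdot> h1)" by (rule assoc) (use pp assms in simp_all)
    finally show ?thesis .
  qed
  have "\<exists>!h. h \<in> hom C (dm h1) P \<and> p \<cdot> h = p \<cdot> h1 \<and> q \<cdot> h = q \<cdot> h1"
    using assms(1) o z eq unfolding is_pullback_def by blast
  moreover have "h1 \<in> hom C (dm h1) P" "h2 \<in> hom C (dm h1) P" using assms by (auto simp: hom_iff)
  ultimately show ?thesis using assms(7,8) by metis
qed

lemma pb_le:
  assumes "pb a n P p q" "z \<in> Arr C" "y \<in> Arr C" "dm z = dm y" "cd z = dm a" "cd y = dm n" "a \<cdot> z = n \<cdot> y"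
  shows "le z p"
proof -
  obtain h where h: "h \<in> Arr C" "dm h = dm z" "cd h = P" "p \<cdot> h = z"
    using pb_univ[OF assms] by blast
  show ?thesis using le_compI[of p h] h pb_parts[OF assms(1)] by simp
qed

lemma pb_sym: "pb a n P p q \<Longrightarrow> pb n a P q p"
  unfolding is_pullback_def by metis

lemma pb_ex: "a \<in> Arr C \<Longrightarrow> n \<in> Arr C \<Longrightarrow> cd a = cd n \<Longrightarrow> \<exists>P p q. pb a n P p q"
  using fcX unfolding finitely_complete_def arrs_Obj by blast

lemma preimage_pb: assumes "a \<in> Arr C" "n \<in> Arr C" "cd a = cd n"
  shows "\<exists>P q. pb a n P (preimage C (Obj C) a n) q"
proof -
  obtain P p q where "pb a n P p q" using pb_ex assms by blast
  then have "\<exists>k P q. pb a n P k q" by blast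
  then show ?thesis unfolding preimage_def by (rule someI_ex)
qed

lemma pb_E1: "pb a e P p q \<Longrightarrow> e \<in> E \<Longrightarrow> p \<in> E"
  using Estable unfolding pullback_stable_def by blast

lemma pb_E2: "pb u n P p q \<Longrightarrow> u \<in> E \<Longrightarrow> q \<in> E"
  using pb_E1 pb_sym by blast

lemma pb_M:
  assumes "pb a n P p q" "n \<in> M"
  shows "p \<in> M"
proof -
  note pp = pb_parts[OF assms(1)]
  obtain e1 m1 where em: "e1 \<in> E" "m1 \<in> M" "cd e1 = dm m1" "p = m1 \<cdot> e1" using factEM pp(5) by blast
  have ea: "e1 \<in> Arr C" "m1 \<in> Arr C" using em E_arr M_arr by auto
  have t: "dm e1 = P" "cd m1 = dm a" using arg_cong[OF em(4), of dm] arg_cong[OF em(4), of cd] ea em(3) pp by auto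
  have sq: "(a \<cdot> m1) \<cdot> e1 = n \<cdot> q"
  proof -
    have "(a \<cdot> m1) \<cdot> e1 = a \<cdot> p" unfolding em(4) using ea em(3) t pp by simp
    then show ?thesis using pp(11) by simp
  qed
  obtain d where d: "d \<in> Arr C" "dm d = cd e1" "cd d = dm n" "d \<cdot> e1 = q" "n \<cdot> d = a \<cdot> m1"
    using diagEM[OF em(1) assms(2) _ pp(8) _ _ _ _ sq] ea t pp em(3) M_arr[OF assms(2)] by auto
  obtain h where h: "h \<in> Arr C" "dm h = dm m1" "cd h = P" "p \<cdot> h = m1" "q \<cdot> h = d"
    using pb_univ[OF assms(1) ea(2) d(1) _ t(2) d(3) d(5)[symmetric]] d(2) em(3) by auto
  have he: "h \<cdot> e1 = Id C P"
  proof (rule pb_uniq[OF assms(1)])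
    show "h \<cdot> e1 \<in> Arr C" "Id C P \<in> Arr C" "dm (h \<cdot> e1) = dm (Id C P)" "cd (h \<cdot> e1) = P" "cd (Id C P) = P"
      using h ea em(3) t pp by auto
    have "p \<cdot> (h \<cdot> e1) = (p \<cdot> h) \<cdot> e1" by (rule assoc') (use h(1,2,3) ea em(3) pp in simp_all)
    also have "\<dots> = p" unfolding h(4) using em(4) by simp
    also have "\<dots> = p \<cdot> Id C P" using pp by simp
    finally show "p \<cdot> (h \<cdot> e1) = p \<cdot> Id C P" .
    have "q \<cdot> (h \<cdot> e1) = (q \<cdot> h) \<cdot> e1" by (rule assoc') (use h(1,2,3) ea em(3) pp in simp_all)
    also have "\<dots> = q" unfolding h(5) d(4) by simp
    also have "\<dots> = q \<cdot> Id C P" using pp by simp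
    finally show "q \<cdot> (h \<cdot> e1) = q \<cdot> Id C P" .
  qed
  have eh: "e1 \<cdot> h = Id C (dm m1)"
  proof (rule M_mono[OF em(2)])
    show "e1 \<cdot> h \<in> Arr C" "Id C (dm m1) \<in> Arr C" "cd (e1 \<cdot> h) = dm m1" "cd (Id C (dm m1)) = dm m1"
      "dm (e1 \<cdot> h) = dm (Id C (dm m1))" using h ea em(3) t arr_obj by auto
    have "m1 \<cdot> (e1 \<cdot> h) = (m1 \<cdot> e1) \<cdot> h" by (rule assoc') (use h(1,2,3) ea em(3) t in simp_all)
    also have "\<dots> = m1" unfolding em(4)[symmetric] h(4) by simp
    also have "\<dots> = m1 \<cdot> Id C (dm m1)" using ea by simp
    finally show "m1 \<cdot> (e1 \<cdot> h) = m1 \<cdot> Id C (dm m1)" .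
  qed
  have "is_iso C e1" using isoI[of e1 h] ea h he eh em(3) t by auto
  then show ?thesis using M_iso_pre[OF em(2)] em(3,4) by auto
qed

lemma N_iso_post: "n \<in> N \<Longrightarrow> is_iso C i \<Longrightarrow> dm i = cd n \<Longrightarrow> cd i \<in> A \<Longrightarrow> i \<cdot> n \<in> N"
  using M_iso_post[OF N_M] inN N_arrs iso_arr by simp

lemma iso_inv:
  assumes "is_iso C i"
  obtains j where "is_iso C j" "j \<in> Arr C" "dm j = cd i" "cd j = dm i" "j \<cdot> i = Id C (dm i)" "i \<cdot> j = Id C (cd i)"
proof -
  obtain j where j: "i \<in> Arr C" "j \<in> Arr C" "dm j = cd i" "cd j = dm i" "j \<cdot> i = Id C (dm i)" "i \<cdot> j = Id C (cd i)"
    using isoE[OF assms] by blast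
  have "is_iso C j" using isoI[of j i] j by simp
  then show ?thesis using that j by blast
qed

lemma refl_iso:
  assumes "is_reflection_arrow C A u" "is_reflection_arrow C A u'" "dm u = dm u'"
  obtains i where "is_iso C i" "i \<in> Arr C" "dm i = cd u'" "cd i = cd u" "i \<cdot> u' = u"
proof -
  have ua: "u \<in> Arr C" "cd u \<in> A" "u' \<in> Arr C" "cd u' \<in> A" using refl_arr assms by auto
  obtain i where i: "i \<in> Arr C" "dm i = cd u'" "cd i = cd u" "i \<cdot> u' = u"
    using refl_ex[OF assms(2) ua(2) ua(1)] assms(3) by auto
  obtain j where j: "j \<in> Arr C" "dm j = cd u" "cd j = cd u'" "j \<cdot> u = u'"
    using refl_ex[OF assms(1) ua(4) ua(3)] assms(3) by auto
  have o: "cd u \<in> Obj C" "cd u' \<in> Obj C" using ua AObj by auto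
  have ji: "j \<cdot> i = Id C (cd u')"
  proof (rule refl_uniq[OF assms(2) ua(4)])
    show "(j \<cdot> i) \<cdot> u' = Id C (cd u') \<cdot> u'"
    proof -
      have "(j \<cdot> i) \<cdot> u' = j \<cdot> (i \<cdot> u')" using i j ua by simp
      also have "\<dots> = u'" unfolding i(4) j(4) ..
      finally show ?thesis using ua by simp
    qed
  qed (use i j o in auto)
  have ij: "i \<cdot> j = Id C (cd u)"
  proof (rule refl_uniq[OF assms(1) ua(2)])
    show "(i \<cdot> j) \<cdot> u = Id C (cd u) \<cdot> u"
    proof -
      have "(i \<cdot> j) \<cdot> u = i \<cdot> (j \<cdot> u)" using i j ua by simp
      also have "\<dots> = u" unfolding i(4) j(4) ..
      finally show ?thesis using ua by simp
    qed
  qed (use i j o in auto)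
  have "is_iso C i" using isoI[of i j] i j ij ji by simp
  then show ?thesis using that i by blast
qed

lemma refl_E: assumes "is_reflection_arrow C A u" shows "u \<in> E"
proof -
  have ua: "u \<in> Arr C" using refl_arr assms by auto
  have o: "dm u \<in> Obj C" using arr_obj ua by blast
  obtain i where i: "is_iso C i" "dm i = cd (\<rho> (dm u))" "i \<cdot> \<rho> (dm u) = u"
    using refl_iso[OF assms rho_refl[OF o]] o by auto
  show ?thesis using E_iso_post[OF rho_E[OF o] i(1,2)] i(3) by simp
qed

lemma Id_refl: assumes "B \<in> A" shows "is_reflection_arrow C A (Id C B)"
proof -
  have o: "B \<in> Obj C" using AObj assms by blast
  have "\<exists>!g. g \<in> hom C B B' \<and> g \<cdot> Id C B = f" if "B' \<in> A" "f \<in> hom C B B'" for B' f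
  proof -
    have "f \<in> hom C B B' \<and> f \<cdot> Id C B = f" using that by (simp add: hom_iff)
    moreover have "g = f" if "g \<in> hom C B B' \<and> g \<cdot> Id C B = f" for g
    proof -
      have "g \<in> Arr C" "dm g = B" "g \<cdot> Id C B = f" using that by (auto simp: hom_iff)
      then show ?thesis using id_r by metis
    qed
    ultimately show ?thesis by blast
  qed
  then show ?thesis unfolding is_reflection_arrow_def using o assms by simp
qed

lemma rho_iso: assumes "B \<in> A" shows "is_iso C (\<rho> B)"
proof -
  have o: "B \<in> Obj C" using AObj assms by blast
  obtain i where i: "is_iso C i" "i \<in> Arr C" "dm i = B" "i \<cdot> Id C B = \<rho> B"
    using refl_iso[OF rho_refl[OF o] Id_refl[OF assms]] o by auto
  have "i = \<rho> B" using i(4) i(2,3) by simp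
  then show ?thesis using i(1) by simp
qed

end

context setting begin

lemma clo1: assumes "B \<in> A" "k \<in> N" "cd k = B" shows "c B k \<in> N" "cd (c B k) = B" "le k (c B k)"
proof -
  have "k \<in> sub C N B" using assms unfolding sub_def by simp
  then have "c B k \<in> sub C N B \<and> le k (c B k)" using clo assms(1) unfolding closure_op_def by blast
  then show "c B k \<in> N" "cd (c B k) = B" "le k (c B k)" unfolding sub_def by auto
qed

lemma clo_mono: assumes "B \<in> A" "k \<in> N" "cd k = B" "k' \<in> N" "cd k' = B" "le k k'" shows "le (c B k) (c B k')"
proof -
  have "k \<in> sub C N B" "k' \<in> sub C N B" using assms unfolding sub_def by simp_all
  then show ?thesis using clo assms(1,6) unfolding closure_op_def by blast
qed

lemma clo_eq: assumes "B \<in> A" "k \<in> N" "cd k = B" "k' \<in> N" "cd k' = B" "sub_eq C k k'" shows "sub_eq C (c B k) (c B k')"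
  using clo_mono assms unfolding sub_eq_iff by blast

lemma clo_img: assumes "f \<in> Arr C" "dm f \<in> A" "cd f \<in> A" "k \<in> N" "cd k = dm f"
  shows "le (image C F N f (c (dm f) k)) (c (cd f) (image C F N f k))"
proof -
  have "f \<in> arrs C A" "k \<in> sub C N (dm f)" using assms unfolding arrs_def sub_def by simp_all
  then show ?thesis using clo unfolding closure_op_def by blast
qed

lemma img_iso: assumes "is_iso C i" "dm i \<in> A" "cd i \<in> A" "x \<in> N" "cd x = dm i"
  shows "sub_eq C (image C F N i x) (i \<cdot> x)"
proof -
  have ia: "i \<in> Arr C" using iso_arr assms by blast
  have xa: "x \<in> Arr C" "dm x \<in> A" using N_arrs assms by auto
  have "LST N (i \<cdot> x) (image C F N i x)" using image_A_LST[OF ia xa(1) assms(5) xa(2) assms(3)] .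
  moreover have "LST N (i \<cdot> x) (i \<cdot> x)" using LST_self[OF N_iso_post[OF assms(4,1)] N_sub] assms by simp
  ultimately show ?thesis using LST_uniq by blast
qed

lemma iso_le: assumes "is_iso C i" "dm i = Q1" "cd i = Q2" "Q1 \<in> A" "Q2 \<in> A" "k \<in> N" "cd k = Q1"
  shows "le (i \<cdot> c Q1 k) (c Q2 (i \<cdot> k))"
proof -
  have ia: "i \<in> Arr C" using iso_arr assms by blast
  note x = clo1[OF assms(4,6,7)]
  have xa: "c Q1 k \<in> Arr C" using N_arrs x by blast
  have ka: "k \<in> Arr C" using N_arrs assms by blast
  have 1: "le (i \<cdot> c Q1 k) (image C F N i (c Q1 k))"
    using img_iso[OF assms(1) _ _ x(1)] assms x unfolding sub_eq_iff by simp
  have 2: "le (image C F N i (c Q1 k)) (c Q2 (image C F N i k))"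
    using clo_img[OF ia _ _ assms(6)] assms by simp
  have ik: "sub_eq C (image C F N i k) (i \<cdot> k)" using img_iso[OF assms(1) _ _ assms(6)] assms by simp
  have ikN: "i \<cdot> k \<in> N" using N_iso_post[OF assms(6,1)] assms by simp
  have ikc: "cd (i \<cdot> k) = Q2" using ia ka assms by simp
  obtain e where ie: "image C F N i k \<in> N" "cd (image C F N i k) = cd i"
    using image_A_props[OF ia ka] assms N_arrs by metis
  have 3: "le (c Q2 (image C F N i k)) (c Q2 (i \<cdot> k))"
    using clo_eq[OF assms(5) ie(1) _ ikN ikc ik] ie(2) assms(3) unfolding sub_eq_iff by blast
  have ca: "c Q2 (i \<cdot> k) \<in> Arr C" "c Q2 (image C F N i k) \<in> Arr C" "image C F N i (c Q1 k) \<in> Arr C"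
    using clo1(1)[OF assms(5) ikN ikc] clo1(1)[OF assms(5) ie(1)] ie(2) assms(3) N_arrs
     image_A_props[OF ia xa] x assms by (metis)+
  show ?thesis using le_trans[OF 1 le_trans[OF 2 3 ca(1)] ca(1)] .
qed

lemma ISO_C: assumes "is_iso C i" "dm i = Q1" "cd i = Q2" "Q1 \<in> A" "Q2 \<in> A" "k \<in> N" "cd k = Q1"
  shows "sub_eq C (c Q2 (i \<cdot> k)) (i \<cdot> c Q1 k)"
proof -
  have ia: "i \<in> Arr C" using iso_arr assms by blast
  have ka: "k \<in> Arr C" using N_arrs assms by blast
  obtain j where j: "is_iso C j" "j \<in> Arr C" "dm j = cd i" "cd j = dm i" "j \<cdot> i = Id C (dm i)" "i \<cdot> j = Id C (cd i)"
    using iso_inv[OF assms(1)] by blast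
  have ikN: "i \<cdot> k \<in> N" using N_iso_post[OF assms(6,1)] assms by simp
  have ikc: "cd (i \<cdot> k) = Q2" using ia ka assms by simp
  have "le (j \<cdot> c Q2 (i \<cdot> k)) (c Q1 (j \<cdot> (i \<cdot> k)))"
    using iso_le[OF j(1) _ _ assms(5,4) ikN ikc] j assms by simp
  moreover have "j \<cdot> (i \<cdot> k) = k"
  proof -
    have "j \<cdot> (i \<cdot> k) = (j \<cdot> i) \<cdot> k" by (rule assoc') (use ia ka j assms in simp_all)
    then show ?thesis unfolding j(5) using ka assms by simp
  qed
  ultimately have l: "le (j \<cdot> c Q2 (i \<cdot> k)) (c Q1 k)" by simp
  note y = clo1[OF assms(5) ikN ikc]
  have ya: "c Q2 (i \<cdot> k) \<in> Arr C" using y N_arrs by blast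
  note x = clo1[OF assms(4,6,7)]
  have xa: "c Q1 k \<in> Arr C" using x N_arrs by blast
  have "le (i \<cdot> (j \<cdot> c Q2 (i \<cdot> k))) (i \<cdot> c Q1 k)" using le_post[OF l ia xa] x assms by simp
  moreover have "i \<cdot> (j \<cdot> c Q2 (i \<cdot> k)) = c Q2 (i \<cdot> k)"
  proof -
    have "i \<cdot> (j \<cdot> c Q2 (i \<cdot> k)) = (i \<cdot> j) \<cdot> c Q2 (i \<cdot> k)" by (rule assoc') (use ia ya y j assms in simp_all)
    then show ?thesis unfolding j(6) using ya y assms by simp
  qed
  ultimately have "le (c Q2 (i \<cdot> k)) (i \<cdot> c Q1 k)" by simp
  then show ?thesis using iso_le[OF assms] unfolding sub_eq_iff by blast
qed

lemma LST_pb: assumes "u \<in> E" "k \<in> N" "pb u k P l t" shows "LST N (u \<cdot> l) k"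
proof -
  note pp = pb_parts[OF assms(3)]
  have "t \<in> E" using pb_E2 assms by blast
  then have "LST N (k \<cdot> t) k" using LST_preE[OF LST_self[OF assms(2) N_sub] NM] pp by blast
  then show ?thesis using pp(11) by simp
qed

lemma pb_cong: assumes "pb a n1 P1 l1 t1" "pb a n2 P2 l2 t2" "le n1 n2"
  shows "le l1 l2"
proof -
  note p1 = pb_parts[OF assms(1)] and p2 = pb_parts[OF assms(2)]
  obtain j where j: "j \<in> Arr C" "cd j = dm n2" "n1 = n2 \<cdot> j" using assms(3) p2(2) le_iff2 by blast
  have dj: "dm j = dm n1" using j p2 by simp
  have "a \<cdot> l1 = n2 \<cdot> (j \<cdot> t1)"
  proof -
    have "a \<cdot> l1 = (n2 \<cdot> j) \<cdot> t1" using p1(11) unfolding j(3) .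
    then show ?thesis using j(1,2) p2(2) p1 dj by simp
  qed
  then show ?thesis using pb_le[OF assms(2) p1(5), of "j \<cdot> t1"] j(1,2) dj p1 p2 by simp
qed

lemma pb_cong_eq: "pb a n1 P1 l1 t1 \<Longrightarrow> pb a n2 P2 l2 t2 \<Longrightarrow> sub_eq C n1 n2 \<Longrightarrow> sub_eq C l1 l2"
  using pb_cong unfolding sub_eq_iff by blast

lemma pb_iso_post: assumes "pb r n P1 l1 t1" "pb u n' P2 l2 t2" "is_iso C i" "dm i = cd r" "u = i \<cdot> r" "n' = i \<cdot> n"
  shows "sub_eq C l1 l2"
proof -
  note p1 = pb_parts[OF assms(1)] and p2 = pb_parts[OF assms(2)]
  have ia: "i \<in> Arr C" using iso_arr assms by blast
  have d: "dm u = dm r" "dm n' = dm n" using assms(5,6) ia p1 assms(4) by simp_all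
  have "u \<cdot> l1 = n' \<cdot> t1"
  proof -
    have "u \<cdot> l1 = i \<cdot> (r \<cdot> l1)" unfolding assms(5) using ia p1 assms(4) by simp
    also have "\<dots> = i \<cdot> (n \<cdot> t1)" using p1(11) by simp
    also have "\<dots> = n' \<cdot> t1" unfolding assms(6) using ia p1 assms(4) by simp
    finally show ?thesis .
  qed
  then have 1: "le l1 l2" using pb_le[OF assms(2) p1(5) p1(8)] p1 d by simp
  have "i \<cdot> (r \<cdot> l2) = i \<cdot> (n \<cdot> t2)"
  proof -
    have "i \<cdot> (r \<cdot> l2) = u \<cdot> l2" unfolding assms(5) using ia p2 p1 d assms(4) by simp
    also have "\<dots> = n' \<cdot> t2" using p2(11) .
    also have "\<dots> = i \<cdot> (n \<cdot> t2)" unfolding assms(6) using ia p2 p1 d assms(4) by simp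
    finally show ?thesis .
  qed
  then have "r \<cdot> l2 = n \<cdot> t2" using iso_cancel[OF assms(3)] p1 p2 d assms(4) by simp
  then have 2: "le l2 l1" using pb_le[OF assms(1) p2(5) p2(8)] p1 p2 d by simp
  show ?thesis using 1 2 unfolding sub_eq_iff by blast
qed

lemma Rmor_props: assumes "m \<in> Arr C"
  shows "Rmor C R \<rho> m \<in> Arr C" "dm (Rmor C R \<rho> m) = R (dm m)" "cd (Rmor C R \<rho> m) = R (cd m)"
    "Rmor C R \<rho> m \<cdot> \<rho> (dm m) = \<rho> (cd m) \<cdot> m"
proof -
  have o: "dm m \<in> Obj C" "cd m \<in> Obj C" using arr_obj assms by auto
  have "\<exists>!g. g \<in> hom C (cd (\<rho> (dm m))) (R (cd m)) \<and> g \<cdot> \<rho> (dm m) = \<rho> (cd m) \<cdot> m"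
    using refl_ex1[OF rho_refl[OF o(1)] RA[OF o(2)]] o assms by simp
  then have "\<exists>!g. g \<in> hom C (R (dm m)) (R (cd m)) \<and> g \<cdot> \<rho> (dm m) = \<rho> (cd m) \<cdot> m" using o by simp
  then have "Rmor C R \<rho> m \<in> hom C (R (dm m)) (R (cd m)) \<and> Rmor C R \<rho> m \<cdot> \<rho> (dm m) = \<rho> (cd m) \<cdot> m"
    unfolding Rmor_def by (rule theI')
  then show "Rmor C R \<rho> m \<in> Arr C" "dm (Rmor C R \<rho> m) = R (dm m)" "cd (Rmor C R \<rho> m) = R (cd m)"
    "Rmor C R \<rho> m \<cdot> \<rho> (dm m) = \<rho> (cd m) \<cdot> m" by (auto simp: hom_iff)
qed

end

context setting begin

abbreviation "cr \<equiv> lift_closure C A F N R \<rho> c"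

lemma rho_LST:
  assumes "m \<in> Arr C" "cd m = P"
  shows "LST N (\<rho> P \<cdot> m) (image C F N (Rmor C R \<rho> m) (Id C (R (dm m))))"
proof -
  note Rm = Rmor_props[OF assms(1)]
  have o: "dm m \<in> Obj C" "cd m \<in> Obj C" using arr_obj assms by auto
  let ?k0 = "image C F N (Rmor C R \<rho> m) (Id C (R (dm m)))"
  have RdA: "R (dm m) \<in> A" "R (cd m) \<in> A" using RA o by auto
  have "LST N (Rmor C R \<rho> m \<cdot> Id C (R (dm m))) ?k0"
    using image_A_LST[OF Rm(1) id_simps(1)[OF AObj[OF RdA(1)]]] Rm RdA AObj by simp
  then have "LST N (Rmor C R \<rho> m) ?k0" using Rm(1,2) by simp
  then have "LST N (Rmor C R \<rho> m \<cdot> \<rho> (dm m)) ?k0"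
    using LST_preE[OF _ NM rho_E[OF o(1)] Rm(1)] Rm(2) o by simp
  then show ?thesis using Rm(4) assms(2) by simp
qed

lemma INV:
  assumes "is_reflection_arrow C A u" "dm u = P" "m \<in> M" "cd m = P" "LST N (u \<cdot> m) k"
    "pb u (c (cd u) k) P' l t"
  shows "sub_eq C (cr P m) l"
proof -
  have ua: "u \<in> Arr C" "cd u \<in> A" using refl_arr assms(1) by auto
  have P: "P \<in> Obj C" using arr_obj ua assms(2) by auto
  have ma: "m \<in> Arr C" using M_arr assms by blast
  let ?k0 = "image C F N (Rmor C R \<rho> m) (Id C (R (dm m)))"
  have L0: "LST N (\<rho> P \<cdot> m) ?k0" using rho_LST[OF ma assms(4)] .
  have k0: "?k0 \<in> N" "?k0 \<in> Arr C" "cd ?k0 = R P" using LST_N_arr[OF L0] ma assms(4) P by auto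
  obtain i where i: "is_iso C i" "i \<in> Arr C" "dm i = R P" "cd i = cd u" "i \<cdot> \<rho> P = u"
    using refl_iso[OF assms(1) rho_refl[OF P]] assms(2) P by auto
  obtain Q where Q: "cd u = Q" by blast
  have QA: "Q \<in> A" using ua Q by simp
  have RPA: "R P \<in> A" using RA P by blast
  have "LST N (i \<cdot> (\<rho> P \<cdot> m)) (image C F N i ?k0)"
    using LST_comp[OF L0 _ i(2)] ma assms(4) P i(3,4) ua by simp
  moreover have "i \<cdot> (\<rho> P \<cdot> m) = u \<cdot> m"
  proof -
    have "i \<cdot> (\<rho> P \<cdot> m) = (i \<cdot> \<rho> P) \<cdot> m" by (rule assoc') (use i ma assms(4) P in simp_all)
    then show ?thesis using i(5) by simp
  qed
  ultimately have L1: "LST N (u \<cdot> m) (image C F N i ?k0)" by simp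
  have kI: "sub_eq C k (image C F N i ?k0)" using LST_uniq[OF assms(5) L1] .
  have Iik: "sub_eq C (image C F N i ?k0) (i \<cdot> ?k0)" using img_iso[OF i(1) _ _ k0(1)] i k0 RPA ua by simp
  have ka: "k \<in> N" "k \<in> Arr C" "cd k = Q" using LST_N_arr[OF assms(5)] ua ma assms(2,4) Q by auto
  have Ia: "image C F N i ?k0 \<in> Arr C" using LST_N_arr[OF L1] by blast
  have ik0: "i \<cdot> ?k0 \<in> N" "cd (i \<cdot> ?k0) = Q" "i \<cdot> ?k0 \<in> Arr C"
    using N_iso_post[OF k0(1) i(1)] i k0 ua Q by auto
  have kik: "sub_eq C k (i \<cdot> ?k0)" using sub_eq_trans[OF kI Iik ka(2) ik0(3) Ia] .
  have c1: "sub_eq C (c Q k) (c Q (i \<cdot> ?k0))" using clo_eq[OF QA ka(1,3) ik0(1,2) kik] .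
  have c2: "sub_eq C (c Q (i \<cdot> ?k0)) (i \<cdot> c (R P) ?k0)"
    using ISO_C[OF i(1,3) _ RPA QA k0(1,3)] i(4) Q by simp
  note ck0 = clo1[OF RPA k0(1,3)]
  have ck0a: "c (R P) ?k0 \<in> Arr C" using ck0 N_arrs by blast
  have cQk: "c Q k \<in> N" "c Q k \<in> Arr C" using clo1[OF QA ka(1,3)] N_arrs by auto
  have cik: "c Q (i \<cdot> ?k0) \<in> Arr C" using clo1[OF QA ik0(1,2)] N_arrs by auto
  have icr: "i \<cdot> c (R P) ?k0 \<in> Arr C" "cd (i \<cdot> c (R P) ?k0) = cd u" using i ck0 ck0a by auto
  have c3: "sub_eq C (c Q k) (i \<cdot> c (R P) ?k0)" using sub_eq_trans[OF c1 c2 cQk(2) icr(1) cik] .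
  obtain P1 t1 where pb1: "pb (\<rho> P) (c (R P) ?k0) P1 (preimage C (Obj C) (\<rho> P) (c (R P) ?k0)) t1"
    using preimage_pb[of "\<rho> P" "c (R P) ?k0"] P ck0 ck0a by auto
  obtain P2 l2 t2 where pb2: "pb u (i \<cdot> c (R P) ?k0) P2 l2 t2"
    using pb_ex[OF ua(1) icr(1)] icr(2) by auto
  have s1: "sub_eq C (preimage C (Obj C) (\<rho> P) (c (R P) ?k0)) l2"
    using pb_iso_post[OF pb1 pb2 i(1)] i P by simp
  have s2: "sub_eq C l2 l" using pb_cong_eq[OF pb2 assms(6)] c3 Q unfolding sub_eq_iff by simp
  have "cr P m = preimage C (Obj C) (\<rho> P) (c (R P) ?k0)" unfolding lift_closure_def by simp
  then show ?thesis using sub_eq_trans[OF s1 s2] pb_parts(5)[OF pb1] pb_parts(5)[OF assms(6)] pb_parts(5)[OF pb2]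
    by simp
qed

end

context setting begin

lemma ext:
  assumes "a \<cdot> b = x \<cdot> d" "a \<in> Arr C" "b \<in> Arr C" "x \<in> Arr C" "d \<in> Arr C" "z \<in> Arr C"
    "cd b = dm a" "cd d = dm x" "cd z = dm b" "cd z = dm d"
  shows "a \<cdot> (b \<cdot> z) = x \<cdot> (d \<cdot> z)"
proof -
  have "a \<cdot> (b \<cdot> z) = (a \<cdot> b) \<cdot> z" by (rule assoc') (use assms in simp_all)
  also have "\<dots> = (x \<cdot> d) \<cdot> z" using assms(1) by simp
  also have "\<dots> = x \<cdot> (d \<cdot> z)" by (rule assoc) (use assms in simp_all)
  finally show ?thesis .
qed

end

locale square = setting +
  fixes f u v g P Y Q B
  assumes f: "f \<in> Arr C" "dm f = P" "cd f = Y"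
    and u: "is_reflection_arrow C A u" "dm u = P" "cd u = Q"
    and v: "is_reflection_arrow C A v" "dm v = Y" "cd v = B"
    and g: "g \<in> Arr C" "dm g = Q" "cd g = B"
    and sq: "g \<cdot> u = v \<cdot> f"

context square begin

lemma ua: "u \<in> Arr C" "Q \<in> A" "u \<in> E" using refl_arr[OF u(1)] u refl_E by auto
lemma va: "v \<in> Arr C" "B \<in> A" "v \<in> E" using refl_arr[OF v(1)] v refl_E by auto
lemma PY: "P \<in> Obj C" "Y \<in> Obj C" "Q \<in> Obj C" "B \<in> Obj C" using arr_obj f ua va AObj by auto

lemma LST_vimg:
  assumes "x \<in> Arr C" "cd x = P" "LST N (u \<cdot> x) K0"
  shows "LST N (v \<cdot> image C E M f x) (image C F N g K0)"
proof -
  obtain e where e: "image C E M f x \<in> M" "cd (image C E M f x) = cd f" "e \<in> E" "dm e = dm x"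
     "cd e = dm (image C E M f x)" "f \<cdot> x = image C E M f x \<cdot> e"
    using image_C_props[OF f(1) assms(1)] assms(2) f by metis
  let ?a = "image C E M f x"
  have aa: "?a \<in> Arr C" "e \<in> Arr C" using e M_arr E_arr by auto
  have L: "LST N (g \<cdot> (u \<cdot> x)) (image C F N g K0)"
    using LST_comp[OF assms(3)] g ua va assms u by simp
  have "g \<cdot> (u \<cdot> x) = v \<cdot> (f \<cdot> x)" by (rule ext[OF sq]) (use g ua va f assms(1,2) u v in simp_all)
  also have "\<dots> = v \<cdot> (?a \<cdot> e)" using e(6) by simp
  also have "\<dots> = (v \<cdot> ?a) \<cdot> e" by (rule assoc') (use aa e va v f in simp_all)
  finally have eq: "g \<cdot> (u \<cdot> x) = (v \<cdot> ?a) \<cdot> e" .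
  have L2: "LST N ((v \<cdot> ?a) \<cdot> e) (image C F N g K0)" using L unfolding eq .
  show ?thesis by (rule LST_unE[OF L2 e(3)]) (use aa e(2,5) va v f in simp_all)
qed

lemma LST_u_cong:
  assumes "LST N (u \<cdot> x) K" "sub_eq C x x'" "x \<in> Arr C" "x' \<in> Arr C" "cd x = P"
  shows "LST N (u \<cdot> x') K"
proof -
  have c: "cd x' = P" using assms le_arr unfolding sub_eq_iff by metis
  have "sub_eq C (u \<cdot> x) (u \<cdot> x')" using le_post[of x x' u] le_post[of x' x u] assms ua u c
    unfolding sub_eq_iff by simp
  then show ?thesis using LST_cong[OF assms(1)] ua assms c u N_sub by simp
qed

lemma LST_v_cong:
  assumes "LST N (v \<cdot> x) K" "sub_eq C x x'" "x \<in> Arr C" "x' \<in> Arr C" "cd x = Y"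
  shows "LST N (v \<cdot> x') K"
proof -
  have c: "cd x' = Y" using assms le_arr unfolding sub_eq_iff by metis
  have "sub_eq C (v \<cdot> x) (v \<cdot> x')" using le_post[of x x' v] le_post[of x' x v] assms va v c
    unfolding sub_eq_iff by simp
  then show ?thesis using LST_cong[OF assms(1)] va assms c v N_sub by simp
qed

lemma DIRA:
  assumes pres: "preserving C E M cr f"
  shows "preserving C F N c g"
  unfolding preserving_def
proof
  fix k assume "k \<in> sub C N (dm g)"
  then have k: "k \<in> N" "cd k = Q" using g unfolding sub_def by auto
  have ka: "k \<in> Arr C" using N_arrs k by blast
  obtain P' l t where pb0: "pb u k P' l t" using pb_ex[OF ua(1) ka] u k by auto
  note p0 = pb_parts[OF pb0]
  have lM: "l \<in> M" using pb_M[OF pb0 N_M[OF k(1)]] .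
  have lc: "cd l = P" using p0 u by simp
  have Ll: "LST N (u \<cdot> l) k" using LST_pb[OF ua(3) k(1) pb0] .
  have pe: "sub_eq C (image C E M f (cr P l)) (cr Y (image C E M f l))"
    using pres lM lc f unfolding preserving_def sub_def by auto
  note ck = clo1[OF ua(2) k(1,2)]
  have cka: "c Q k \<in> Arr C" using ck N_arrs by blast
  obtain P'' lx tx where pbx: "pb u (c Q k) P'' lx tx" using pb_ex[OF ua(1) cka] u ck by auto
  note px = pb_parts[OF pbx]
  have xl: "sub_eq C (cr P l) lx" using INV[OF u(1,2) lM lc Ll] pbx u by simp
  have xa: "cr P l \<in> Arr C" "cd (cr P l) = P" using le_arr[of "cr P l" lx] xl px u unfolding sub_eq_iff by auto
  have "LST N (u \<cdot> lx) (c Q k)" using LST_pb[OF ua(3) ck(1) pbx] .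
  then have "LST N (u \<cdot> cr P l) (c Q k)" using LST_u_cong[of lx "c Q k" "cr P l"] xl px u xa
    unfolding sub_eq_iff by simp
  then have L1: "LST N (v \<cdot> image C E M f (cr P l)) (image C F N g (c Q k))"
    using LST_vimg[OF xa] by simp
  have la: "l \<in> Arr C" using M_arr lM by blast
  let ?n = "image C E M f l"
  obtain e where ne: "?n \<in> M" "cd ?n = cd f"
    using image_C_props[OF f(1) la] lc f by metis
  have na: "?n \<in> Arr C" "cd ?n = Y" using ne M_arr f by auto
  have Ln: "LST N (v \<cdot> ?n) (image C F N g k)" using LST_vimg[OF la lc Ll] .
  let ?K = "image C F N g k"
  have K: "?K \<in> N" "cd ?K = B" using LST_N_arr[OF Ln] va v na by auto
  note cK = clo1[OF va(2) K]
  have cKa: "c B ?K \<in> Arr C" using cK N_arrs by blast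
  obtain P3 lb tb where pb3: "pb v (c B ?K) P3 lb tb" using pb_ex[OF va(1) cKa] v cK by auto
  note p3 = pb_parts[OF pb3]
  have nl: "sub_eq C (cr Y ?n) lb" using INV[OF v(1,2) ne(1) na(2) Ln] pb3 v by simp
  have cra: "cr Y ?n \<in> Arr C" "cd (cr Y ?n) = Y" using le_arr[of "cr Y ?n" lb] nl p3 v unfolding sub_eq_iff by auto
  have Lb: "LST N (v \<cdot> lb) (c B ?K)" using LST_pb[OF va(3) cK(1) pb3] .
  obtain e' where ie: "image C E M f (cr P l) \<in> M" "cd (image C E M f (cr P l)) = cd f"
    using image_C_props[OF f(1) xa(1)] xa f by metis
  have iea: "image C E M f (cr P l) \<in> Arr C" "cd (image C E M f (cr P l)) = Y" using ie M_arr f by auto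
  have "LST N (v \<cdot> cr Y ?n) (image C F N g (c Q k))" using LST_v_cong[OF L1 pe iea(1) cra(1) iea(2)] .
  then have "LST N (v \<cdot> lb) (image C F N g (c Q k))" using LST_v_cong[OF _ nl cra(1) p3(5) cra(2)] by simp
  then have "sub_eq C (image C F N g (c Q k)) (c B ?K)" using LST_uniq Lb by blast
  then show "sub_eq C (image C F N g (c (dm g) k)) (c (cd g) (image C F N g k))" using g by simp
qed

lemma DIRB:
  assumes pres: "preserving C F N c g"
    and BC: "\<And>k P1 l1 t1 P2 w t2. k \<in> N \<Longrightarrow> cd k = Q \<Longrightarrow> pb u k P1 l1 t1 \<Longrightarrow>
       pb v (image C F N g k) P2 w t2 \<Longrightarrow> sub_eq C (image C E M f l1) w"
  shows "preserving C E M cr f"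
  unfolding preserving_def
proof
  fix m assume "m \<in> sub C M (dm f)"
  then have m: "m \<in> M" "cd m = P" using f unfolding sub_def by auto
  have ma: "m \<in> Arr C" using M_arr m by blast
  have um: "u \<cdot> m \<in> Arr C" "cd (u \<cdot> m) = Q" using ma m ua u by auto
  obtain k where Lk: "LST N (u \<cdot> m) k" using LST_ex[OF um(1)] um ua by auto
  have k: "k \<in> N" "cd k = Q" "k \<in> Arr C" "dm k \<in> A" using LST_N_arr[OF Lk] um by auto
  note ck = clo1[OF ua(2) k(1,2)]
  have cka: "c Q k \<in> Arr C" "dm (c Q k) \<in> A" using ck N_arrs by auto
  obtain P1 l1 t1 where pb1: "pb u (c Q k) P1 l1 t1" using pb_ex[OF ua(1) cka(1)] u ck by auto
  note p1 = pb_parts[OF pb1]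
  have xl: "sub_eq C (cr P m) l1" using INV[OF u(1,2) m Lk] pb1 u by simp
  have xa: "cr P m \<in> Arr C" "cd (cr P m) = P" using le_arr[of "cr P m" l1] xl p1 u unfolding sub_eq_iff by auto
  have l1a: "l1 \<in> Arr C" "cd l1 = P" using p1 u by auto
  have I1: "LST M (f \<cdot> cr P m) (image C E M f (cr P m))" using image_C_LST[OF f(1) xa(1)] xa f by simp
  have I2: "LST M (f \<cdot> l1) (image C E M f l1)" using image_C_LST[OF f(1) l1a(1)] l1a f by simp
  have "sub_eq C (f \<cdot> cr P m) (f \<cdot> l1)" using le_post[of "cr P m" l1 f] le_post[of l1 "cr P m" f] xl xa l1a f
    unfolding sub_eq_iff by simp
  then have "LST M (f \<cdot> l1) (image C E M f (cr P m))" using LST_cong[OF I1] xa l1a f M_sub by simp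
  then have s1: "sub_eq C (image C E M f (cr P m)) (image C E M f l1)" using LST_uniq I2 by blast
  obtain e0 where Ip: "image C F N g (c Q k) \<in> N" "cd (image C F N g (c Q k)) = cd g"
    using image_A_props[OF g(1) cka(1)] ck g cka va by metis
  have Ia: "image C F N g (c Q k) \<in> Arr C" using Ip N_arrs by blast
  obtain P2 w t2 where pb2: "pb v (image C F N g (c Q k)) P2 w t2" using pb_ex[OF va(1) Ia] Ip g v by auto
  note p2 = pb_parts[OF pb2]
  have s2: "sub_eq C (image C E M f l1) w" using BC[OF ck(1,2) pb1 pb2] .
  have pk: "sub_eq C (image C F N g (c Q k)) (c B (image C F N g k))"
    using pres k g unfolding preserving_def sub_def by auto
  let ?n = "image C E M f m"
  obtain e where ne: "?n \<in> M" "cd ?n = cd f"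
    using image_C_props[OF f(1) ma] m f by metis
  have na: "?n \<in> Arr C" "cd ?n = Y" using ne M_arr f by auto
  have Ln: "LST N (v \<cdot> ?n) (image C F N g k)" using LST_vimg[OF ma m(2) Lk] .
  let ?K = "image C F N g k"
  have K: "?K \<in> N" "cd ?K = B" using LST_N_arr[OF Ln] va v na by auto
  note cK = clo1[OF va(2) K]
  have cKa: "c B ?K \<in> Arr C" using cK N_arrs by blast
  obtain P3 lb tb where pb3: "pb v (c B ?K) P3 lb tb" using pb_ex[OF va(1) cKa] v cK by auto
  note p3 = pb_parts[OF pb3]
  have nl: "sub_eq C (cr Y ?n) lb" using INV[OF v(1,2) ne(1) na(2) Ln] pb3 v by simp
  have cra: "cr Y ?n \<in> Arr C" using le_arr[of "cr Y ?n" lb] nl p3 unfolding sub_eq_iff by auto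
  have s3: "sub_eq C w lb" using pb_cong_eq[OF pb2 pb3 pk] .
  have ia: "image C E M f (cr P m) \<in> Arr C" "image C E M f l1 \<in> Arr C"
    using LST_def I1 I2 M_arr by auto
  have "sub_eq C (image C E M f (cr P m)) lb"
    using sub_eq_trans[OF sub_eq_trans[OF s1 s2 ia(1) p2(5) ia(2)] s3 ia(1) p3(5) p2(5)] .
  then have "sub_eq C (image C E M f (cr P m)) (cr Y ?n)"
    using sub_eq_trans[OF _ sub_eq_sym[OF nl] ia(1) cra p3(5)] by blast
  then show "sub_eq C (image C E M f (cr (dm f) m)) (cr (cd f) (image C E M f m))" using f by simp
qed

end

context setting begin

lemma prod_parts: assumes "is_product C S X Y P p1 p2"
  shows "X \<in> S" "Y \<in> S" "P \<in> S" "p1 \<in> Arr C" "dm p1 = P" "cd p1 = X" "p2 \<in> Arr C" "dm p2 = P" "cd p2 = Y"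
  using assms unfolding is_product_def hom_iff by auto

lemma prod_univ: assumes "is_product C S X Y P p1 p2" "Z \<in> S" "a \<in> Arr C" "dm a = Z" "cd a = X"
  "b \<in> Arr C" "dm b = Z" "cd b = Y"
  shows "\<exists>!h. h \<in> hom C Z P \<and> p1 \<cdot> h = a \<and> p2 \<cdot> h = b"
proof -
  have "a \<in> hom C Z X" "b \<in> hom C Z Y" using assms by (auto simp: hom_iff)
  then show ?thesis using assms(1,2) unfolding is_product_def by blast
qed

lemma prodC_univ: assumes "is_product C (Obj C) X Y P p1 p2" "a \<in> Arr C" "cd a = X"
  "b \<in> Arr C" "dm b = dm a" "cd b = Y"
  obtains h where "h \<in> Arr C" "dm h = dm a" "cd h = P" "p1 \<cdot> h = a" "p2 \<cdot> h = b"
proof -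
  have "dm a \<in> Obj C" using arr_obj assms by blast
  then have "\<exists>!h. h \<in> hom C (dm a) P \<and> p1 \<cdot> h = a \<and> p2 \<cdot> h = b" using prod_univ[OF assms(1)] assms by simp
  then show ?thesis using that unfolding hom_iff by blast
qed

lemma prodA_univ: assumes "is_product C A X Y Q q1 q2" "a \<in> Arr C" "cd a = X"
  "b \<in> Arr C" "dm b = dm a" "cd b = Y"
  obtains h where "h \<in> Arr C" "dm h = dm a" "cd h = Q" "q1 \<cdot> h = a" "q2 \<cdot> h = b"
proof -
  note qq = prod_parts[OF assms(1)]
  obtain Z where Z0: "dm a = Z" by blast
  have Z: "Z \<in> Obj C" using arr_obj assms Z0 by blast
  obtain ab where ab: "ab \<in> Arr C" "dm ab = R Z" "cd ab = X" "ab \<cdot> \<rho> Z = a"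
    using refl_ex[OF rho_refl[OF Z] qq(1) assms(2)] Z Z0 assms by auto
  obtain bb where bb: "bb \<in> Arr C" "dm bb = R Z" "cd bb = Y" "bb \<cdot> \<rho> Z = b"
    using refl_ex[OF rho_refl[OF Z] qq(2) assms(4)] Z Z0 assms by auto
  have "\<exists>!h. h \<in> hom C (R Z) Q \<and> q1 \<cdot> h = ab \<and> q2 \<cdot> h = bb"
    using prod_univ[OF assms(1) RA[OF Z] ab(1,2,3) bb(1,2,3)] .
  then obtain hb where hb: "hb \<in> Arr C" "dm hb = R Z" "cd hb = Q" "q1 \<cdot> hb = ab" "q2 \<cdot> hb = bb"
    unfolding hom_iff by blast
  have "q1 \<cdot> (hb \<cdot> \<rho> Z) = a"
  proof -
    have "q1 \<cdot> (hb \<cdot> \<rho> Z) = (q1 \<cdot> hb) \<cdot> \<rho> Z" by (rule assoc') (use hb(1,2,3) qq Z in simp_all)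
    then show ?thesis using hb(4) ab(4) by simp
  qed
  moreover have "q2 \<cdot> (hb \<cdot> \<rho> Z) = b"
  proof -
    have "q2 \<cdot> (hb \<cdot> \<rho> Z) = (q2 \<cdot> hb) \<cdot> \<rho> Z" by (rule assoc') (use hb(1,2,3) qq Z in simp_all)
    then show ?thesis using hb(5) bb(4) by simp
  qed
  moreover have "hb \<cdot> \<rho> Z \<in> Arr C" "dm (hb \<cdot> \<rho> Z) = dm a" "cd (hb \<cdot> \<rho> Z) = Q" using hb(1,2,3) Z Z0 by auto
  ultimately show ?thesis using that by blast
qed

lemma prodA_uniq: assumes "is_product C A X Y Q q1 q2" "h1 \<in> Arr C" "h2 \<in> Arr C" "dm h1 = dm h2"
  "cd h1 = Q" "cd h2 = Q" "q1 \<cdot> h1 = q1 \<cdot> h2" "q2 \<cdot> h1 = q2 \<cdot> h2"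
  shows "h1 = h2"
proof -
  note qq = prod_parts[OF assms(1)]
  obtain Z where Z0: "dm h1 = Z" by blast
  have Z: "Z \<in> Obj C" using arr_obj assms Z0 by blast
  obtain b1 where b1: "b1 \<in> Arr C" "dm b1 = R Z" "cd b1 = Q" "b1 \<cdot> \<rho> Z = h1"
    using refl_ex[OF rho_refl[OF Z] qq(3) assms(2)] Z Z0 assms by auto
  obtain b2 where b2: "b2 \<in> Arr C" "dm b2 = R Z" "cd b2 = Q" "b2 \<cdot> \<rho> Z = h2"
    using refl_ex[OF rho_refl[OF Z] qq(3) assms(3)] Z Z0 assms by auto
  have c1: "q1 \<cdot> b1 = q1 \<cdot> b2"
  proof (rule refl_uniq[OF rho_refl[OF Z] qq(1)])
    have "(q1 \<cdot> b1) \<cdot> \<rho> Z = q1 \<cdot> h1" unfolding b1(4)[symmetric] by (rule assoc) (use b1(1,2,3) qq Z in simp_all)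
    also have "\<dots> = q1 \<cdot> h2" using assms(7) .
    also have "\<dots> = (q1 \<cdot> b2) \<cdot> \<rho> Z" unfolding b2(4)[symmetric] by (rule assoc') (use b2(1,2,3) qq Z in simp_all)
    finally show "(q1 \<cdot> b1) \<cdot> \<rho> Z = (q1 \<cdot> b2) \<cdot> \<rho> Z" .
  qed (use b1(1,2,3) b2(1,2,3) qq Z in simp_all)
  have c2: "q2 \<cdot> b1 = q2 \<cdot> b2"
  proof (rule refl_uniq[OF rho_refl[OF Z] qq(2)])
    have "(q2 \<cdot> b1) \<cdot> \<rho> Z = q2 \<cdot> h1" unfolding b1(4)[symmetric] by (rule assoc) (use b1(1,2,3) qq Z in simp_all)
    also have "\<dots> = q2 \<cdot> h2" using assms(8) .
    also have "\<dots> = (q2 \<cdot> b2) \<cdot> \<rho> Z" unfolding b2(4)[symmetric] by (rule assoc') (use b2(1,2,3) qq Z in simp_all)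
    finally show "(q2 \<cdot> b1) \<cdot> \<rho> Z = (q2 \<cdot> b2) \<cdot> \<rho> Z" .
  qed (use b1(1,2,3) b2(1,2,3) qq Z in simp_all)
  have "\<exists>!h. h \<in> hom C (R Z) Q \<and> q1 \<cdot> h = q1 \<cdot> b1 \<and> q2 \<cdot> h = q2 \<cdot> b1"
    by (rule prod_univ[OF assms(1) RA[OF Z]]) (use b1(1,2,3) qq in simp_all)
  moreover have "b1 \<in> hom C (R Z) Q" "b2 \<in> hom C (R Z) Q" using b1 b2 by (auto simp: hom_iff)
  ultimately have "b1 = b2" using c1 c2 by metis
  then show ?thesis using b1(4) b2(4) by simp
qed

lemma prod_ex: assumes "finitely_complete C S" "S \<subseteq> Obj C" "X \<in> S" "Y \<in> S"
  shows "\<exists>P p1 p2. is_product C S X Y P p1 p2"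
proof -
  obtain T where T: "is_terminal C S T" using assms(1) unfolding finitely_complete_def by blast
  have TS: "T \<in> S" and Tu: "\<And>Z. Z \<in> S \<Longrightarrow> \<exists>!t. t \<in> hom C Z T" using T unfolding is_terminal_def by auto
  obtain tX where tX: "tX \<in> hom C X T" using Tu[OF assms(3)] by blast
  obtain tY where tY: "tY \<in> hom C Y T" using Tu[OF assms(4)] by blast
  have "tX \<in> arrs C S" "tY \<in> arrs C S" using tX tY assms TS unfolding arrs_def hom_iff by auto
  moreover have "cd tX = cd tY" using tX tY by (simp add: hom_iff)
  ultimately obtain P p q where pb: "is_pullback C S tX tY P p q" using assms(1) unfolding finitely_complete_def by blast
  have "is_product C S X Y P p q"
    unfolding is_product_def
  proof (intro conjI ballI)
    show "X \<in> S" "Y \<in> S" "P \<in> S" using assms pb unfolding is_pullback_def by auto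
    show "p \<in> hom C P X" "q \<in> hom C P Y" using pb tX tY unfolding is_pullback_def hom_iff by auto
    fix Z a b assume Z: "Z \<in> S" and a: "a \<in> hom C Z X" and b: "b \<in> hom C Z Y"
    have ZO: "Z \<in> Obj C" using Z assms by blast
    have "tX \<cdot> a \<in> hom C Z T" "tY \<cdot> b \<in> hom C Z T" using a b tX tY unfolding hom_iff by auto
    then have "tX \<cdot> a = tY \<cdot> b" using Tu[OF Z] by blast
    moreover have univ: "\<forall>Q\<in>S. \<forall>u\<in>hom C Q (dm tX). \<forall>v\<in>hom C Q (dm tY). tX \<cdot> u = tY \<cdot> v \<longrightarrow>
        (\<exists>!h. h \<in> hom C Q P \<and> p \<cdot> h = u \<and> q \<cdot> h = v)" using pb unfolding is_pullback_def by (elim conjE) assumption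
    moreover have "a \<in> hom C Z (dm tX)" "b \<in> hom C Z (dm tY)" using a b tX tY by (auto simp: hom_iff)
    ultimately show "\<exists>!h. h \<in> hom C Z P \<and> p \<cdot> h = a \<and> q \<cdot> h = b" using Z by blast
  qed
  then show ?thesis by blast
qed

lemma prod_iso: assumes "is_product C S X Y P p1 p2" "is_iso C i" "dm i = Y" "cd i = Y'" "Y' \<in> S" "S \<subseteq> Obj C"
  shows "is_product C S X Y' P p1 (i \<cdot> p2)"
proof -
  note pp = prod_parts[OF assms(1)]
  obtain j where j: "is_iso C j" "j \<in> Arr C" "dm j = cd i" "cd j = dm i" "j \<cdot> i = Id C (dm i)" "i \<cdot> j = Id C (cd i)"
    using iso_inv[OF assms(2)] by blast
  have ia: "i \<in> Arr C" using iso_arr assms by blast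
  show ?thesis unfolding is_product_def
  proof (intro conjI ballI)
    show "X \<in> S" "Y' \<in> S" "P \<in> S" "p1 \<in> hom C P X" "i \<cdot> p2 \<in> hom C P Y'" using pp assms ia by (auto simp: hom_iff)
    fix Z a b assume Z: "Z \<in> S" and a: "a \<in> hom C Z X" and b: "b \<in> hom C Z Y'"
    have aa: "a \<in> Arr C" "dm a = Z" "cd a = X" "b \<in> Arr C" "dm b = Z" "cd b = Y'" using a b by (auto simp: hom_iff)
    have jb: "j \<cdot> b \<in> Arr C" "dm (j \<cdot> b) = Z" "cd (j \<cdot> b) = Y" using aa j assms by auto
    obtain h where h: "h \<in> hom C Z P" "p1 \<cdot> h = a" "p2 \<cdot> h = j \<cdot> b"
      and hu: "\<And>h'. h' \<in> hom C Z P \<and> p1 \<cdot> h' = a \<and> p2 \<cdot> h' = j \<cdot> b \<Longrightarrow> h' = h"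
      using prod_univ[OF assms(1) Z aa(1,2,3) jb] by metis
    have ha: "h \<in> Arr C" "dm h = Z" "cd h = P" using h by (auto simp: hom_iff)
    have "(i \<cdot> p2) \<cdot> h = b"
    proof -
      have "(i \<cdot> p2) \<cdot> h = i \<cdot> (p2 \<cdot> h)" by (rule assoc) (use ia pp ha assms in simp_all)
      also have "\<dots> = i \<cdot> (j \<cdot> b)" using h(3) by simp
      also have "\<dots> = (i \<cdot> j) \<cdot> b" by (rule assoc') (use ia j aa assms in simp_all)
      also have "\<dots> = b" unfolding j(6) using aa assms by simp
      finally show ?thesis .
    qed
    moreover have "h' = h" if h': "h' \<in> hom C Z P" "p1 \<cdot> h' = a" "(i \<cdot> p2) \<cdot> h' = b" for h'
    proof -
      have h'a: "h' \<in> Arr C" "dm h' = Z" "cd h' = P" using h' by (auto simp: hom_iff)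
      have "p2 \<cdot> h' = j \<cdot> b"
      proof -
        have "p2 \<cdot> h' = (j \<cdot> i) \<cdot> (p2 \<cdot> h')" unfolding j(5) using h'a pp assms by simp
        also have "\<dots> = j \<cdot> (i \<cdot> (p2 \<cdot> h'))" by (rule assoc) (use h'a pp assms ia j in simp_all)
        also have "\<dots> = j \<cdot> ((i \<cdot> p2) \<cdot> h')" using assoc'[of h' p2 i] h'a pp assms ia by simp
        also have "\<dots> = j \<cdot> b" using h'(3) by simp
        finally show ?thesis .
      qed
      then show ?thesis using hu h' by blast
    qed
    ultimately show "\<exists>!h. h \<in> hom C Z P \<and> p1 \<cdot> h = a \<and> (i \<cdot> p2) \<cdot> h = b" using h(1,2) by blast
  qed
qed

end

context setting begin

lemma BC:
  assumes X: "X \<in> Obj C" and PP: "is_product C (Obj C) X Y P p1 p2" and QQ: "is_product C A (R X) B Q q1 q2"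
    and v: "v \<in> Arr C" "dm v = Y" "cd v = B" and u: "u \<in> Arr C" "dm u = P" "cd u = Q"
    and eu1: "q1 \<cdot> u = \<rho> X \<cdot> p1" and eu2: "q2 \<cdot> u = v \<cdot> p2"
    and k: "k \<in> N" "cd k = Q" and pb1: "pb u k P1 l1 t1" and pb2: "pb v (image C F N q2 k) P2 w t2"
  shows "sub_eq C (image C E M p2 l1) w"
proof -
  note pp = prod_parts[OF PP] and qq = prod_parts[OF QQ]
  have ka: "k \<in> Arr C" "dm k \<in> A" using N_arrs k by auto
  let ?I = "image C F N q2 k"
  obtain e where I: "?I \<in> N" "cd ?I = cd q2" "e \<in> F" "dm e = dm k" "cd e = dm ?I" "q2 \<cdot> k = ?I \<cdot> e"
    using image_A_props[OF qq(7) ka(1)] k qq ka by metis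
  have Ia: "?I \<in> Arr C" "e \<in> Arr C" "e \<in> E" using I N_arrs F_arrs F_E by auto
  note p1' = pb_parts[OF pb1] and p2' = pb_parts[OF pb2]
  obtain e3 where a: "image C E M p2 l1 \<in> M" "cd (image C E M p2 l1) = cd p2" "e3 \<in> E" "dm e3 = dm l1"
     "cd e3 = dm (image C E M p2 l1)" "p2 \<cdot> l1 = image C E M p2 l1 \<cdot> e3"
    using image_C_props[OF pp(7) p1'(5)] p1' pp u by metis
  obtain ai where ai: "ai = image C E M p2 l1" by blast
  have aa: "ai \<in> M" "ai \<in> Arr C" "cd ai = Y" "e3 \<in> Arr C" "cd e3 = dm ai" "p2 \<cdot> l1 = ai \<cdot> e3"
    using a ai M_arr E_arr pp by auto
  have wM: "w \<in> M" using pb_M[OF pb2 N_M[OF I(1)]] .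
  have wa: "w \<in> Arr C" "cd w = Y" "dm w = P2" using p2' v by auto
  have "v \<cdot> (p2 \<cdot> l1) = ?I \<cdot> (e \<cdot> t1)"
  proof -
    have "v \<cdot> (p2 \<cdot> l1) = q2 \<cdot> (u \<cdot> l1)" by (rule ext[OF eu2[symmetric]]) (use v pp qq u p1' in simp_all)
    also have "\<dots> = q2 \<cdot> (k \<cdot> t1)" using p1'(11) by simp
    also have "\<dots> = ?I \<cdot> (e \<cdot> t1)" by (rule ext[OF I(6)]) (use qq k ka Ia I p1' in simp_all)
    finally show ?thesis .
  qed
  then have "le (p2 \<cdot> l1) w" using pb_le[OF pb2, of "p2 \<cdot> l1" "e \<cdot> t1"] pp p1' u v Ia I ka by simp
  then have le1: "le ai w" using image_C_LST[OF pp(7) p1'(5)] p1' u wM wa pp ai unfolding LST_def by auto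
  obtain P3 s t' where pb3: "pb t2 e P3 s t'" using pb_ex[of t2 e] p2' Ia I by auto
  note p3 = pb_parts[OF pb3]
  have sE: "s \<in> E" using pb_E1[OF pb3 Ia(3)] .
  obtain x0 where x0: "x0 = q1 \<cdot> (k \<cdot> t')" by blast
  have x0a: "x0 \<in> Arr C" "dm x0 = P3" "cd x0 = R X" using x0 qq p3 k ka I by auto
  obtain P4 s' x where pb4: "pb x0 (\<rho> X) P4 s' x" using pb_ex[of x0 "\<rho> X"] x0a X by auto
  note p4 = pb_parts[OF pb4]
  have s'E: "s' \<in> E" using pb_E1[OF pb4 rho_E[OF X]] .
  have ss: "s \<cdot> s' \<in> Arr C" "dm (s \<cdot> s') = P4" "cd (s \<cdot> s') = P2" "w \<cdot> (s \<cdot> s') \<in> Arr C"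
    "dm (w \<cdot> (s \<cdot> s')) = P4" "cd (w \<cdot> (s \<cdot> s')) = Y"
    using p3 p4 p2' x0a wa by auto
  obtain z where z: "z \<in> Arr C" "dm z = P4" "cd z = P" "p1 \<cdot> z = x" "p2 \<cdot> z = w \<cdot> (s \<cdot> s')"
    using prodC_univ[OF PP p4(8) _ ss(4)] p4 ss X by auto
  have ts: "t' \<cdot> s' \<in> Arr C" "dm (t' \<cdot> s') = P4" "cd (t' \<cdot> s') = dm k" using p3 p4 x0a I by auto
  have E1: "q1 \<cdot> (u \<cdot> z) = q1 \<cdot> (k \<cdot> (t' \<cdot> s'))"
  proof -
    have "q1 \<cdot> (u \<cdot> z) = \<rho> X \<cdot> (p1 \<cdot> z)" by (rule ext[OF eu1]) (use qq u z pp X in simp_all)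
    also have "\<dots> = \<rho> X \<cdot> x" using z(4) by simp
    also have "\<dots> = x0 \<cdot> s'" using p4(11) by simp
    also have "\<dots> = q1 \<cdot> (k \<cdot> (t' \<cdot> s'))" unfolding x0 using qq k ka p3 p4 I x0a x0 by simp
    finally show ?thesis .
  qed
  have E2: "q2 \<cdot> (u \<cdot> z) = q2 \<cdot> (k \<cdot> (t' \<cdot> s'))"
  proof -
    have "q2 \<cdot> (u \<cdot> z) = v \<cdot> (p2 \<cdot> z)" by (rule ext[OF eu2]) (use qq u z pp v in simp_all)
    also have "\<dots> = v \<cdot> (w \<cdot> (s \<cdot> s'))" using z(5) by simp
    also have "\<dots> = ?I \<cdot> (t2 \<cdot> (s \<cdot> s'))" by (rule ext[OF p2'(11)]) (use p2' ss v in simp_all)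
    also have "t2 \<cdot> (s \<cdot> s') = e \<cdot> (t' \<cdot> s')" by (rule ext[OF p3(11)]) (use p3 p4 x0a in simp_all)
    also have "?I \<cdot> (e \<cdot> (t' \<cdot> s')) = q2 \<cdot> (k \<cdot> (t' \<cdot> s'))"
      by (rule ext[OF I(6)[symmetric]]) (use qq k ka Ia I ts in simp_all)
    finally show ?thesis .
  qed
  have uz: "u \<cdot> z = k \<cdot> (t' \<cdot> s')"
    using prodA_uniq[OF QQ _ _ _ _ _ E1 E2] u z k ka ts by simp
  obtain h where h: "h \<in> Arr C" "dm h = dm z" "cd h = P1" "l1 \<cdot> h = z"
    using pb_univ[OF pb1 z(1) ts(1) _ _ _ uz] z ts u by auto
  have W: "(w \<cdot> s) \<cdot> s' = ai \<cdot> (e3 \<cdot> h)"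
  proof -
    have "(w \<cdot> s) \<cdot> s' = w \<cdot> (s \<cdot> s')" by (rule assoc) (use p3 p4 wa x0a p2' in simp_all)
    also have "\<dots> = p2 \<cdot> z" using z(5) by simp
    also have "\<dots> = p2 \<cdot> (l1 \<cdot> h)" using h(4) by simp
    also have "\<dots> = ai \<cdot> (e3 \<cdot> h)" by (rule ext[OF aa(6)]) (use pp p1' aa h u a ai in simp_all)
    finally show ?thesis .
  qed
  have ws: "w \<cdot> s \<in> Arr C" "dm (w \<cdot> s) = P3" "cd (w \<cdot> s) = Y" using wa p3 p2' by auto
  have e3h: "e3 \<cdot> h \<in> Arr C" "dm (e3 \<cdot> h) = P4" "cd (e3 \<cdot> h) = dm ai" using aa h z a ai p1' by auto
  obtain d1 where d1: "d1 \<in> Arr C" "dm d1 = cd s'" "cd d1 = dm ai" "ai \<cdot> d1 = w \<cdot> s"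
    using diagEM[OF s'E aa(1) ws(1) e3h(1) _ _ _ _ W] ws e3h aa(3) p4 x0a by auto
  obtain d2 where d2: "d2 \<in> Arr C" "cd d2 = dm ai" "ai \<cdot> d2 = w"
    using diagEM[OF sE aa(1) wa(1) d1(1) _ _ _ _ d1(4)[symmetric]] wa aa(3) d1 p3 p4 p2' x0a by auto
  have le2: "le w ai" using le_compI[OF aa(2) d2(1,2)] unfolding d2(3) .
  show ?thesis using le1 le2 ai unfolding sub_eq_iff by simp
qed

end

context setting begin

lemma sqI: assumes "f \<in> Arr C" "dm f = P" "cd f = Y"
    "is_reflection_arrow C A u" "dm u = P" "cd u = Q"
    "is_reflection_arrow C A v" "dm v = Y" "cd v = B"
    "g \<in> Arr C" "dm g = Q" "cd g = B" "g \<cdot> u = v \<cdot> f"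
  shows "square C A E M F N R \<rho> c f u v g P Y Q B"
  by (unfold_locales) (use assms in auto)

lemma main:
  assumes X: "X \<in> Obj C" and prod: "preserves_products_with C A R \<rho> X"
  shows "compact C (Obj C) E M cr X \<longleftrightarrow> compact C A F N c (R X)"
proof -
  have pr: "\<And>Y P p1 p2 Q q1 q2 u. Y \<in> Obj C \<Longrightarrow> is_product C (Obj C) X Y P p1 p2 \<Longrightarrow>
     is_product C A (R X) (R Y) Q q1 q2 \<Longrightarrow> u \<in> hom C P Q \<Longrightarrow> q1 \<cdot> u = \<rho> X \<cdot> p1 \<Longrightarrow>
     q2 \<cdot> u = \<rho> Y \<cdot> p2 \<Longrightarrow> is_reflection_arrow C A u"
    using prod unfolding preserves_products_with_def by blast
  have RXA: "R X \<in> A" using RA X by blast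
  show ?thesis
  proof
    assume cX: "compact C (Obj C) E M cr X"
    show "compact C A F N c (R X)" unfolding compact_def
    proof (intro ballI allI impI)
      fix B Q q1 q2 assume B: "B \<in> A" and QQ: "is_product C A (R X) B Q q1 q2"
      have BO: "B \<in> Obj C" using AObj B by blast
      obtain P p1 p2 where PP: "is_product C (Obj C) X B P p1 p2"
        using prod_ex[OF fcX subset_refl X BO] by blast
      have pres: "preserving C E M cr p2" using cX BO PP unfolding compact_def by blast
      note pp = prod_parts[OF PP] and qq = prod_parts[OF QQ]
      have rx: "\<rho> X \<cdot> p1 \<in> Arr C" "cd (\<rho> X \<cdot> p1) = R X" "dm (\<rho> X \<cdot> p1) = P" using pp X by auto
      obtain u where u: "u \<in> Arr C" "dm u = P" "cd u = Q" "q1 \<cdot> u = \<rho> X \<cdot> p1" "q2 \<cdot> u = p2"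
        using prodA_univ[OF QQ rx(1,2) pp(7)] rx pp by metis
      have QQ': "is_product C A (R X) (R B) Q q1 (\<rho> B \<cdot> q2)"
        using prod_iso[OF QQ rho_iso[OF B] _ _ RA[OF BO] A_Obj] BO by simp
      have eq: "(\<rho> B \<cdot> q2) \<cdot> u = \<rho> B \<cdot> p2"
      proof -
        have "(\<rho> B \<cdot> q2) \<cdot> u = \<rho> B \<cdot> (q2 \<cdot> u)" by (rule assoc) (use u qq BO in simp_all)
        then show ?thesis using u(5) by simp
      qed
      have ur: "is_reflection_arrow C A u"
        using pr[OF BO PP QQ' _ u(4) eq] u by (simp add: hom_iff)
      have sq: "q2 \<cdot> u = Id C B \<cdot> p2" using u(5) pp BO by simp
      have S: "square C A E M F N R \<rho> c p2 u (Id C B) q2 P B Q B"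
        using sqI[OF pp(7,8,9) ur u(2,3) Id_refl[OF B] _ _ qq(7,8,9) sq] BO by simp
      show "preserving C F N c q2" using square.DIRA[OF S pres] .
    qed
  next
    assume cR: "compact C A F N c (R X)"
    show "compact C (Obj C) E M cr X" unfolding compact_def
    proof (intro ballI allI impI)
      fix Y P p1 p2 assume Y: "Y \<in> Obj C" and PP: "is_product C (Obj C) X Y P p1 p2"
      have RYA: "R Y \<in> A" using RA Y by blast
      obtain Q q1 q2 where QQ: "is_product C A (R X) (R Y) Q q1 q2"
        using prod_ex[OF fcA A_Obj RXA RYA] by blast
      have pres: "preserving C F N c q2" using cR RYA QQ unfolding compact_def by blast
      note pp = prod_parts[OF PP] and qq = prod_parts[OF QQ]
      have rx: "\<rho> X \<cdot> p1 \<in> Arr C" "cd (\<rho> X \<cdot> p1) = R X" "dm (\<rho> X \<cdot> p1) = P" using pp X by auto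
      have ry: "\<rho> Y \<cdot> p2 \<in> Arr C" "cd (\<rho> Y \<cdot> p2) = R Y" "dm (\<rho> Y \<cdot> p2) = P" using pp Y by auto
      obtain u where u: "u \<in> Arr C" "dm u = P" "cd u = Q" "q1 \<cdot> u = \<rho> X \<cdot> p1" "q2 \<cdot> u = \<rho> Y \<cdot> p2"
        using prodA_univ[OF QQ rx(1,2) ry(1)] rx ry by metis
      have ur: "is_reflection_arrow C A u"
        using pr[OF Y PP QQ _ u(4,5)] u by (simp add: hom_iff)
      have S: "square C A E M F N R \<rho> c p2 u (\<rho> Y) q2 P Y Q (R Y)"
        using sqI[OF pp(7,8,9) ur u(2,3) rho_refl[OF Y] _ _ qq(7,8,9) u(5)] Y by simp
      have BCh: "sub_eq C (image C E M p2 l1) w"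
        if "k \<in> N" "cd k = Q" "pb u k P1 l1 t1" "pb (\<rho> Y) (image C F N q2 k) P2 w t2" for k P1 l1 t1 P2 w t2
        using BC[OF X PP QQ _ _ _ u(1,2,3,4,5) that] Y by simp
      show "preserving C E M cr p2"
        by (rule square.DIRB[OF S pres]) (rule BCh; assumption)
    qed
  qed
qed

end

theorem corollary2p10:
  fixes C :: "('o,'m) cat" and A :: "'o set"
    and E M F N :: "'m set"
    and R :: "'o \<Rightarrow> 'o" and \<rho> :: "'o \<Rightarrow> 'm"
    and c :: "'o \<Rightarrow> 'm \<Rightarrow> 'm" and X :: 'o
  assumes cat: "is_category C"
    and fcX: "finitely_complete C (Obj C)"
    and fcA: "finitely_complete C A"
    and EM: "proper_factorization_system C (Obj C) E M"
    and FN: "proper_factorization_system C A F N"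
    and refl: "reflective C A R \<rho>"
    and NM: "N \<subseteq> M"
    and RE: "\<forall>e\<in>E. Rmor C R \<rho> e \<in> F"
    and Estable: "pullback_stable C (Obj C) E"
    and Neq: "N = {m \<in> M. Dom C m \<in> A \<and> Cod C m \<in> A}"
    and Erefl: "\<forall>Y\<in>Obj C. \<rho> Y \<in> E"
    and clo: "closure_op C A F N c"
    and X: "X \<in> Obj C"
    and prod: "preserves_products_with C A R \<rho> X"
  shows "compact C (Obj C) E M (lift_closure C A F N R \<rho> c) X \<longleftrightarrow> compact C A F N c (R X)"
proof -
  interpret setting C A E M F N R \<rho> c
    by (unfold_locales) (use cat fcX fcA EM FN refl Estable Neq Erefl clo in auto)
  show ?thesis using main[OF X prod] .
qed

end
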